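(* Consider $K\ge 2$ arms, $1\le m<K$, quantile level $\tau\in(0,1)$ and budget $N\ge\frac{4}{1-\tau}\overline{\log}(K)+K$, where $\overline{\log}(K)=\frac12+\sum_{i=2}^K\frac1i$. Each arm $i$ has an unknown reward distribution $F_i$ (arms independent, samples i.i.d. within an arm) satisfying the IHR assumption with hazard-rate lower bound $L_i>0$ and having a continuously differentiable density, and $b_i\ge0$ is a constant with $|\mathbb{E}[X^i_{(\lfloor n(1-\tau)\rfloor)}]-Q^\tau_i|\le b_i/n$ for all $n$ (where $X^i_{(j)}$ are order statistics of $n$ samples of arm $i$). Assume the set $\mathcal{S}_m^\ast$ of $m$ arms with the largest $\tau$-quantiles is unique. Then the Q-SAR algorithm returns a set $\mathcal{S}_m^N$ satisfying $$e_N:=\mathbb{P}\big(\mathcal{S}_m^N\ne\mathcal{S}_m^\ast\big)\le 2K^2\exp\Big(-\frac{N-K}{\overline{\log}(K)\,H^\tau}\Big),$$ where $H^\tau=\max_{i,j\in\{1,\dots,K\}}\frac{8j}{1-\tau}\Big(\frac{4\alpha}{L_i^2\Delta_{(j)}^2}+\frac{\beta_i}{L_i^2\Delta_{(j)}}\Big)$, $\alpha=\frac{4(1+\tau)}{1-\tau}$, $\beta_i=\frac43\big(2L_i+b_i(1-\tau)L_i^2\big)$.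
   Context: IHR assumption for a distribution: support $[0,\infty)$, density $f$, c.d.f. $F$, hazard rate $h=f/(1-F)$ non-decreasing, $L=\inf_x h(x)>0$. $Q^\tau_i:=\inf\{x:F_i(x)\ge\tau\}$. For $n$ samples of arm $i$ sorted decreasingly $X^i_{(1)}\ge\cdots\ge X^i_{(n)}$, the empirical quantile is $\hat Q^\tau_{i,n}:=X^i_{(\lfloor n(1-\tau)\rfloor)}$. Order arms as $o_1,\dots,o_K$ with $Q^\tau_{o_1}\ge\cdots\ge Q^\tau_{o_K}$; $\mathcal{S}_m^\ast=\{o_1,\dots,o_m\}$. Gaps: $\Delta_i=Q^\tau_i-Q^\tau_{o_{m+1}}$ if $i\in\mathcal{S}_m^\ast$, $\Delta_i=Q^\tau_{o_m}-Q^\tau_i$ otherwise; $\Delta_{(1)}\le\cdots\le\Delta_{(K)}$ are the gaps sorted non-decreasingly. Q-SAR algorithm: set $n_0=0$, $n_p=\big\lceil\frac{1}{\overline{\log}(K)}\frac{N-K}{K+1-p}\big\rceil$ for $p=1,\dots,K-1$; active set $\mathcal{A}_1=\{1,\dots,K\}$, accepted set $\mathcal{M}_1=\emptyset$, $l_1=m$. For each phase $p=1,\dots,K-1$: (1) sample each $i\in\mathcal{A}_p$ a further $n_p-n_{p-1}$ times (so each active arm has $n_p$ samples); (2) sort the active arms by empirical quantile $\hat Q^\tau_{i,n_p}$ in non-increasing order as $a_1,\dots,a_{K+1-p}$ (ties broken arbitrarily); (3) compute $\hat\Delta_{best}=\hat Q^\tau_{a_1,n_p}-\hat Q^\tau_{a_{l_p+1},n_p}$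 and $\hat\Delta_{worst}=\hat Q^\tau_{a_{l_p},n_p}-\hat Q^\tau_{a_{K+1-p},n_p}$; if $\hat\Delta_{best}>\hat\Delta_{worst}$, set $\mathcal{A}_{p+1}=\mathcal{A}_p\setminus\{a_1\}$, $\mathcal{M}_{p+1}=\mathcal{M}_p\cup\{a_1\}$, $l_{p+1}=l_p-1$; otherwise set $\mathcal{A}_{p+1}=\mathcal{A}_p\setminus\{a_{K+1-p}\}$, $\mathcal{M}_{p+1}=\mathcal{M}_p$, $l_{p+1}=l_p$. Return $\mathcal{S}_m^N=\mathcal{A}_K\cup\mathcal{M}_K$. *)

theory Defs
  imports "HOL-Probability.Probability"
begin

definition dens_meas :: "(real \<Rightarrow> real) \<Rightarrow> real measure" where
  "dens_meas f = density lborel (\<lambda>x. ennreal (f x))"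

definition Fcdf :: "(real \<Rightarrow> real) \<Rightarrow> real \<Rightarrow> real" where
  "Fcdf f = cdf (dens_meas f)"

definition hazard :: "(real \<Rightarrow> real) \<Rightarrow> real \<Rightarrow> real" where
  "hazard f x = f x / (1 - Fcdf f x)"

definition hazard_lb :: "(real \<Rightarrow> real) \<Rightarrow> real" where
  "hazard_lb f = (INF x\<in>{0..}. hazard f x)"

definition IHR :: "(real \<Rightarrow> real) \<Rightarrow> bool" where
  "IHR f \<longleftrightarrow> f \<in> borel_measurable lborel \<and> (\<forall>x. 0 \<le> f x) \<and> (\<forall>x<0. f x = 0)
     \<and> prob_space (dens_meas f) \<and> mono_on {0..} (hazard f) \<and> hazard_lb f > 0"

definition C1_density :: "(real \<Rightarrow> real) \<Rightarrow> bool" where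
  "C1_density f \<longleftrightarrow> (\<exists>f'. continuous_on {0..} f' \<and>
       (\<forall>x\<ge>0. (f has_real_derivative f' x) (at x within {0..})))"

definition quantile :: "(real \<Rightarrow> real) \<Rightarrow> real \<Rightarrow> real" where
  "quantile f \<tau> = Inf {x. \<tau> \<le> Fcdf f x}"

text \<open>X_(j) for j = 1..n: the j-th largest sample (samples sorted decreasingly).
  Convention: index 0 is read as 1 (nat subtraction).\<close>
definition order_stat :: "real list \<Rightarrow> nat \<Rightarrow> real" where
  "order_stat xs j = rev (sort xs) ! (j - 1)"

definition emp_quantile :: "real \<Rightarrow> real list \<Rightarrow> real" where
  "emp_quantile \<tau> xs = order_stat xs (nat \<lfloor>real (length xs) * (1 - \<tau>)\<rfloor>)"

definition logbar :: "nat \<Rightarrow> real" where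
  "logbar K = 1/2 + (\<Sum>i=2..K. 1 / real i)"

definition n_phase :: "nat \<Rightarrow> nat \<Rightarrow> nat \<Rightarrow> nat" where
  "n_phase N K p = (if p = 0 then 0
     else nat \<lceil>(1 / logbar K) * ((real N - real K) / real (K + 1 - p))\<rceil>)"

text \<open>One phase p.  q i n is the empirical tau-quantile of the first n samples of arm i.
  Active arms are sorted by non-increasing empirical quantile (ties broken by arm index,
  via the stable sort).  State = (active set A, accepted set M, l).
  Degenerate cases: l = 0 (no a_l): reject the worst; l \<ge> |A| (no a_{l+1}): accept the best.\<close>
definition qsar_phase :: "nat \<Rightarrow> nat \<Rightarrow> (nat \<Rightarrow> nat \<Rightarrow> real) \<Rightarrow> nat
      \<Rightarrow> nat set \<times> nat set \<times> nat \<Rightarrow> nat set \<times> nat set \<times> nat" where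
  "qsar_phase N K q p st = (case st of (A, Acc, l) \<Rightarrow>
     (let n = n_phase N K p;
          as = sort_key (\<lambda>i. - q i n) (sorted_list_of_set A);
          r = length as;
          a1 = as ! 0;
          ar = as ! (r - 1);
          accept = (A - {a1}, Acc \<union> {a1}, l - 1);
          reject = (A - {ar}, Acc, l)
      in if l = 0 then reject
         else if r \<le> l then accept
         else (let dbest = q a1 n - q (as ! l) n;
                   dworst = q (as ! (l - 1)) n - q ar n
               in if dbest > dworst then accept else reject)))"

fun qsar_iter :: "nat \<Rightarrow> nat \<Rightarrow> nat \<Rightarrow> (nat \<Rightarrow> nat \<Rightarrow> real) \<Rightarrow> nat
      \<Rightarrow> nat set \<times> nat set \<times> nat" where
  "qsar_iter N K m q 0 = ({1..K}, {}, m)"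
| "qsar_iter N K m q (Suc p) = qsar_phase N K q (Suc p) (qsar_iter N K m q p)"

definition qsar :: "nat \<Rightarrow> nat \<Rightarrow> nat \<Rightarrow> (nat \<Rightarrow> nat \<Rightarrow> real) \<Rightarrow> nat set" where
  "qsar N K m q = (case qsar_iter N K m q (K - 1) of (A, Acc, l) \<Rightarrow> A \<union> Acc)"

text \<open>Q : arm \<Rightarrow> quantile, S = optimal set, arms 1..K\<close>
definition gap :: "nat \<Rightarrow> (nat \<Rightarrow> real) \<Rightarrow> nat set \<Rightarrow> nat \<Rightarrow> real" where
  "gap K Q S i = (if i \<in> S then Q i - Max (Q ` ({1..K} - S))
                  else Min (Q ` S) - Q i)"

definition sorted_gap :: "nat \<Rightarrow> (nat \<Rightarrow> real) \<Rightarrow> nat set \<Rightarrow> nat \<Rightarrow> real" where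
  "sorted_gap K Q S j = sort (map (gap K Q S) [1..<K+1]) ! (j - 1)"

definition H_tau :: "nat \<Rightarrow> real \<Rightarrow> (nat \<Rightarrow> real) \<Rightarrow> nat set \<Rightarrow> (nat \<Rightarrow> real) \<Rightarrow> (nat \<Rightarrow> real) \<Rightarrow> real" where
  "H_tau K \<tau> Q S L b =
     (let \<alpha> = 4 * (1 + \<tau>) / (1 - \<tau>);
          \<beta> = (\<lambda>i. 4/3 * (2 * L i + b i * (1 - \<tau>) * (L i)^2))
      in Max ((\<lambda>(i,j). 8 * real j / (1 - \<tau>) *
                 (4 * \<alpha> / ((L i)^2 * (sorted_gap K Q S j)^2)
                  + \<beta> i / ((L i)^2 * sorted_gap K Q S j))) ` ({1..K} \<times> {1..K})))"

end

theory Submission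
  imports Defs
begin



lemma IHR_D:
  assumes "IHR f"
  shows "real_distribution (dens_meas f)"
proof -
  have "prob_space (dens_meas f)" using assms unfolding IHR_def by auto
  then show ?thesis unfolding real_distribution_def real_distribution_axioms_def
    by (simp add: dens_meas_def)
qed

lemma IHR_null:
  assumes "IHR f" "A \<in> sets borel" "AE x in lborel. x \<in> A \<longrightarrow> f x = 0"
  shows "measure (dens_meas f) A = 0"
proof -
  have fm: "(\<lambda>x. ennreal (f x)) \<in> borel_measurable lborel" using assms(1) unfolding IHR_def by auto
  have "A \<in> null_sets (dens_meas f)"
    unfolding dens_meas_def
    apply (subst null_sets_density_iff[OF fm])
    using assms(2,3) by (auto elim!: AE_mp)
  then show ?thesis by (simp add: measure_def null_setsD1)
qed

lemma IHR_single: assumes "IHR f" shows "measure (dens_meas f) {a} = 0"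
  apply (rule IHR_null[OF assms], simp)
  using AE_lborel_singleton[of a] by eventually_elim auto

lemma IHR_F_neg: assumes "IHR f" "x \<le> 0" shows "Fcdf f x = 0"
proof -
  have "measure (dens_meas f) {..x} = 0"
    apply (rule IHR_null[OF assms(1)])
     apply simp
    apply (rule AE_mp[OF AE_lborel_singleton[of 0]])
    using assms unfolding IHR_def by auto
  then show ?thesis unfolding Fcdf_def cdf_def by simp
qed

lemma IHR_Fcdf_mono: assumes "IHR f" "x \<le> y" shows "Fcdf f x \<le> Fcdf f y"
  using finite_borel_measure.cdf_nondecreasing[OF real_distribution.finite_borel_measure_M[OF IHR_D[OF assms(1)]] assms(2)] unfolding Fcdf_def .

lemma IHR_F_le1: assumes "IHR f" shows "Fcdf f x \<le> 1"
  using real_distribution.cdf_bounded_prob[OF IHR_D[OF assms(1)]] unfolding Fcdf_def by auto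

lemma IHR_F_ge0: assumes "IHR f" shows "0 \<le> Fcdf f x"
  using finite_borel_measure.cdf_nonneg[OF real_distribution.finite_borel_measure_M[OF IHR_D[OF assms(1)]]]
  unfolding Fcdf_def by auto

lemma IHR_isCont: assumes "IHR f" shows "isCont (Fcdf f) x"
  unfolding Fcdf_def
  using finite_borel_measure.isCont_cdf[OF real_distribution.finite_borel_measure_M[OF IHR_D[OF assms(1)]]]
    IHR_single[OF assms] by auto

lemma IHR_surv: assumes "IHR f" shows "measure (dens_meas f) {u<..} = 1 - Fcdf f u"
proof -
  interpret D: real_distribution "dens_meas f" by (rule IHR_D[OF assms])
  have "{u<..} = space (dens_meas f) - {..u}" by auto
  then have "measure (dens_meas f) {u<..} = 1 - measure (dens_meas f) {..u}"
    using D.prob_compl[of "{..u}"] by simp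
  then show ?thesis unfolding Fcdf_def cdf_def by simp
qed

lemma IHR_surv_ge: assumes "IHR f" shows "measure (dens_meas f) {u..} = 1 - Fcdf f u"
proof -
  interpret D: real_distribution "dens_meas f" by (rule IHR_D[OF assms])
  have "{u..} = {u<..} \<union> {u}" by auto
  then have "measure (dens_meas f) {u..} = measure (dens_meas f) {u<..} + measure (dens_meas f) {u}"
    using D.finite_measure_Union[of "{u<..}" "{u}"] by simp
  then show ?thesis using IHR_surv[OF assms] IHR_single[OF assms] by simp
qed

lemma IHR_hazard_lb: assumes "IHR f" "0 \<le> t" shows "hazard_lb f \<le> hazard f t"
proof -
  have m: "mono_on {0..} (hazard f)" using assms unfolding IHR_def by auto
  have "bdd_below (hazard f ` {0..})"
    by (rule bdd_belowI2[of _ "hazard f 0"]) (use m in \<open>auto simp: mono_on_def\<close>)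
  then show ?thesis unfolding hazard_lb_def using assms(2) by (auto intro: cINF_lower)
qed

lemma IHR_f_ge: assumes "IHR f" "0 \<le> t" shows "hazard_lb f * (1 - Fcdf f t) \<le> f t"
proof (cases "1 - Fcdf f t = 0")
  case True
  then show ?thesis using assms unfolding IHR_def by auto
next
  case False
  then have pos: "1 - Fcdf f t > 0" using IHR_F_le1[OF assms(1), of t] by linarith
  have "hazard_lb f \<le> f t / (1 - Fcdf f t)" using IHR_hazard_lb[OF assms] unfolding hazard_def .
  then show ?thesis using pos by (simp add: field_simps)
qed

lemma IHR_step:
  assumes "IHR f" "0 \<le> u" "u \<le> v"
  shows "(1 - Fcdf f v) * (1 + hazard_lb f * (v - u)) \<le> 1 - Fcdf f u"
proof (cases "u = v")
  case True then show ?thesis by simp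
next
  case False
  then have uv: "u < v" using assms by simp
  interpret D: real_distribution "dens_meas f" by (rule IHR_D[OF assms(1)])
  define L where "L = hazard_lb f"
  define c where "c = L * (1 - Fcdf f v)"
  have L0: "0 < L" using assms unfolding IHR_def L_def by auto
  have c0: "0 \<le> c" unfolding c_def using L0 IHR_F_le1[OF assms(1)] by simp
  have fm: "(\<lambda>x. ennreal (f x)) \<in> borel_measurable lborel" using assms(1) unfolding IHR_def by auto
  have "ennreal (c * (v - u)) = (\<integral>\<^sup>+ x. ennreal c * indicator {u<..v} x \<partial>lborel)"
    using uv c0 by (simp add: nn_integral_cmult_indicator ennreal_mult)
  also have "\<dots> \<le> (\<integral>\<^sup>+ x. ennreal (f x) * indicator {u<..v} x \<partial>lborel)"
  proof (intro nn_integral_mono)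
    fix x
    show "ennreal c * indicator {u<..v} x \<le> ennreal (f x) * indicator {u<..v} x"
    proof (cases "x \<in> {u<..v}")
      case True
      then have x: "0 \<le> x" "x \<le> v" using assms by auto
      have "c \<le> L * (1 - Fcdf f x)" unfolding c_def using L0 IHR_Fcdf_mono[OF assms(1) x(2)]
        by (intro mult_left_mono) auto
      also have "\<dots> \<le> f x" unfolding L_def by (rule IHR_f_ge[OF assms(1) x(1)])
      finally show ?thesis using True by (simp add: ennreal_leI)
    qed simp
  qed
  also have "\<dots> = emeasure (dens_meas f) {u<..v}"
    unfolding dens_meas_def by (simp add: emeasure_density[OF fm])
  also have "\<dots> = ennreal (measure (dens_meas f) {u<..v})"
    by (simp add: D.emeasure_eq_measure)
  finally have "c * (v - u) \<le> measure (dens_meas f) {u<..v}"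
    by (simp add: ennreal_le_iff)
  also have "measure (dens_meas f) {u<..v} = Fcdf f v - Fcdf f u"
    unfolding Fcdf_def using D.cdf_diff_eq[OF uv] by simp
  finally show ?thesis unfolding c_def L_def by (simp add: algebra_simps)
qed

lemma IHR_iter:
  assumes "IHR f" "0 \<le> u" "0 \<le> d"
  shows "(1 - Fcdf f (u + real k * d)) * (1 + hazard_lb f * d) ^ k \<le> 1 - Fcdf f u"
proof (induction k)
  case 0 then show ?case by simp
next
  case (Suc k)
  have L0: "0 \<le> hazard_lb f" using assms unfolding IHR_def by auto
  have "(1 - Fcdf f (u + real (Suc k) * d)) * (1 + hazard_lb f * d) ^ Suc k
      = ((1 - Fcdf f ((u + real k * d) + d)) * (1 + hazard_lb f * ((u + real k * d + d) - (u + real k * d)))) * (1 + hazard_lb f * d) ^ k"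
    by (simp add: algebra_simps)
  also have "\<dots> \<le> (1 - Fcdf f (u + real k * d)) * (1 + hazard_lb f * d) ^ k"
    apply (rule mult_right_mono)
     apply (rule IHR_step[OF assms(1)])
    using assms L0 by auto
  also have "\<dots> \<le> 1 - Fcdf f u" by (rule Suc.IH)
  finally show ?case .
qed

lemma IHR_exp_tail:
  assumes "IHR f" "0 \<le> u" "u \<le> v"
  shows "(1 - Fcdf f v) * exp (hazard_lb f * (v - u)) \<le> 1 - Fcdf f u"
proof -
  define a where "a = hazard_lb f * (v - u)"
  have L0: "0 \<le> hazard_lb f" using assms unfolding IHR_def by auto
  have "\<forall>n\<ge>1. (1 - Fcdf f v) * (1 + a / real n) ^ n \<le> 1 - Fcdf f u"
  proof (intro allI impI)
    fix n :: nat assume n: "1 \<le> n"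
    have e1: "u + real n * ((v - u) / real n) = v" using n by simp
    have e2: "hazard_lb f * ((v - u) / real n) = a / real n" unfolding a_def by simp
    show "(1 - Fcdf f v) * (1 + a / real n) ^ n \<le> 1 - Fcdf f u"
      using IHR_iter[OF assms(1,2), of "(v - u) / real n" n] assms unfolding e1 e2 by simp
  qed
  moreover have "(\<lambda>n. (1 - Fcdf f v) * (1 + a / real n) ^ n) \<longlonglongrightarrow> (1 - Fcdf f v) * exp a"
    by (intro tendsto_mult_left tendsto_exp_limit_sequentially)
  ultimately show ?thesis unfolding a_def[symmetric]
    by (intro LIMSEQ_le_const2) auto
qed

lemma IHR_quant_set:
  assumes "IHR f" "0 < \<tau>" "\<tau> < 1"
  shows "{x. \<tau> \<le> Fcdf f x} \<noteq> {}" "bdd_below {x. \<tau> \<le> Fcdf f x}"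
    "\<And>x. \<tau> \<le> Fcdf f x \<Longrightarrow> 0 < x"
proof -
  interpret D: real_distribution "dens_meas f" by (rule IHR_D[OF assms(1)])
  have "((Fcdf f) \<longlongrightarrow> 1) at_top" unfolding Fcdf_def by (rule D.cdf_lim_at_top_prob)
  then have "eventually (\<lambda>x. \<tau> < Fcdf f x) at_top" using assms(3) by (rule order_tendstoD)
  then obtain x where "\<tau> < Fcdf f x" by (auto simp: eventually_at_top_linorder)
  then show "{x. \<tau> \<le> Fcdf f x} \<noteq> {}" by (auto intro: less_imp_le)
  show pos: "\<And>x. \<tau> \<le> Fcdf f x \<Longrightarrow> 0 < x"
  proof (rule ccontr)
    fix x assume "\<tau> \<le> Fcdf f x" "\<not> 0 < x"
    then show False using IHR_F_neg[OF assms(1), of x] assms(2) by auto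
  qed
  show "bdd_below {x. \<tau> \<le> Fcdf f x}" by (rule bdd_belowI[of _ 0]) (use pos in fastforce)
qed

lemma IHR_quant:
  assumes "IHR f" "0 < \<tau>" "\<tau> < 1"
  shows "0 \<le> quantile f \<tau>" "Fcdf f (quantile f \<tau>) = \<tau>"
    "\<And>y. \<tau> \<le> Fcdf f y \<Longrightarrow> quantile f \<tau> \<le> y"
proof -
  note S = IHR_quant_set[OF assms]
  define Q where "Q = quantile f \<tau>"
  have Qdef: "Q = Inf {x. \<tau> \<le> Fcdf f x}" unfolding Q_def quantile_def ..
  show le: "\<And>y. \<tau> \<le> Fcdf f y \<Longrightarrow> quantile f \<tau> \<le> y"
    unfolding quantile_def by (rule cInf_lower) (use S in auto)
  show "0 \<le> quantile f \<tau>"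
    unfolding quantile_def by (rule cInf_greatest) (use S in \<open>auto intro: less_imp_le\<close>)
  have c: "isCont (Fcdf f) Q" by (rule IHR_isCont[OF assms(1)])
  have t1: "(\<lambda>n. Q + 1 / real (Suc n)) \<longlonglongrightarrow> Q"
    using tendsto_add[OF tendsto_const[of Q] LIMSEQ_Suc[OF lim_const_over_n[of 1]]] by simp
  have t2: "(\<lambda>n. Q - 1 / real (Suc n)) \<longlonglongrightarrow> Q"
    using tendsto_diff[OF tendsto_const[of Q] LIMSEQ_Suc[OF lim_const_over_n[of 1]]] by simp
  have A: "\<forall>n. \<tau> \<le> Fcdf f (Q + 1 / real (Suc n))"
  proof
    fix n
    have "Inf {x. \<tau> \<le> Fcdf f x} < Q + 1 / real (Suc n)" unfolding Qdef[symmetric] by simp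
    then obtain x where x: "\<tau> \<le> Fcdf f x" "x < Q + 1 / real (Suc n)"
      using cInf_less_iff[OF S(1,2)] by auto
    then show "\<tau> \<le> Fcdf f (Q + 1 / real (Suc n))"
      using IHR_Fcdf_mono[OF assms(1), of x "Q + 1 / real (Suc n)"] by simp
  qed
  have B: "\<forall>n. Fcdf f (Q - 1 / real (Suc n)) \<le> \<tau>"
  proof
    fix n
    show "Fcdf f (Q - 1 / real (Suc n)) \<le> \<tau>"
    proof (rule ccontr)
      assume "\<not> Fcdf f (Q - 1 / real (Suc n)) \<le> \<tau>"
      then have "Q \<le> Q - 1 / real (Suc n)" using le[of "Q - 1 / real (Suc n)"] unfolding Q_def by auto
      then show False by simp
    qed
  qed
  have "\<tau> \<le> Fcdf f Q"
    using isCont_tendsto_compose[OF c t1] A by (intro LIMSEQ_le_const) auto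
  moreover have "Fcdf f Q \<le> \<tau>"
    using isCont_tendsto_compose[OF c t2] B by (intro LIMSEQ_le_const2) auto
  ultimately show "Fcdf f (quantile f \<tau>) = \<tau>" unfolding Q_def by simp
qed

lemma IHR_QL:
  assumes "IHR f" "0 < \<tau>" "\<tau> < 1"
  shows "quantile f \<tau> * hazard_lb f \<le> - ln (1 - \<tau>)"
proof -
  define L where "L = hazard_lb f"
  have L0: "0 < L" using assms unfolding IHR_def L_def by auto
  define y where "y = - ln (1 - \<tau>) / L"
  have "ln (1 - \<tau>) \<le> 0" using assms by simp
  then have y0: "0 \<le> y" unfolding y_def using L0 by (simp add: divide_nonpos_pos)
  have ey: "exp (L * (y - 0)) = 1 / (1 - \<tau>)" unfolding y_def using L0 assms
    by (simp add: exp_minus ln_div[symmetric] exp_ln inverse_eq_divide)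
  have "(1 - Fcdf f y) * exp (L * (y - 0)) \<le> 1 - Fcdf f 0"
    using IHR_exp_tail[OF assms(1) _ y0] unfolding L_def by simp
  then have "(1 - Fcdf f y) / (1 - \<tau>) \<le> 1" using IHR_F_neg[OF assms(1), of 0] ey by simp
  then have "\<tau> \<le> Fcdf f y" using assms by (simp add: divide_le_eq)
  then have "quantile f \<tau> \<le> y" by (rule IHR_quant(3)[OF assms])
  then show ?thesis unfolding y_def L_def[symmetric] using L0 by (simp add: le_divide_eq field_simps)
qed

lemma IHR_upper_tail:
  assumes "IHR f" "0 < \<tau>" "\<tau> < 1" "0 \<le> \<epsilon>" "0 \<le> L'" "L' \<le> hazard_lb f"
  shows "measure (dens_meas f) {quantile f \<tau> + \<epsilon>..} \<le> (1 - \<tau>) * exp (- L' * \<epsilon>)"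
proof -
  define Q where "Q = quantile f \<tau>"
  have "(1 - Fcdf f (Q + \<epsilon>)) * exp (hazard_lb f * (Q + \<epsilon> - Q)) \<le> 1 - Fcdf f Q"
    using IHR_exp_tail[OF assms(1), of Q "Q + \<epsilon>"] IHR_quant(1)[OF assms(1-3)] assms(4)
    unfolding Q_def by simp
  then have "(1 - Fcdf f (Q + \<epsilon>)) * exp (hazard_lb f * \<epsilon>) \<le> 1 - \<tau>"
    using IHR_quant(2)[OF assms(1-3)] unfolding Q_def by simp
  moreover have "exp (L' * \<epsilon>) \<le> exp (hazard_lb f * \<epsilon>)"
    using assms by (simp add: mult_right_mono)
  moreover have "0 \<le> 1 - Fcdf f (Q + \<epsilon>)" using IHR_F_le1[OF assms(1)] by (simp)
  ultimately have "(1 - Fcdf f (Q + \<epsilon>)) * exp (L' * \<epsilon>) \<le> 1 - \<tau>"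
    by (meson mult_left_mono order_trans)
  then have "1 - Fcdf f (Q + \<epsilon>) \<le> (1 - \<tau>) * exp (- L' * \<epsilon>)"
    by (simp add: exp_minus field_simps)
  then show ?thesis using IHR_surv_ge[OF assms(1)] unfolding Q_def by simp
qed

lemma IHR_lower_tail:
  assumes "IHR f" "0 < \<tau>" "\<tau> < 1" "0 \<le> \<epsilon>" "0 \<le> L'" "L' \<le> hazard_lb f"
  shows "min 1 ((1 - \<tau>) * exp (L' * \<epsilon>)) \<le> measure (dens_meas f) {quantile f \<tau> - \<epsilon><..}"
proof -
  define Q where "Q = quantile f \<tau>"
  have "min 1 ((1 - \<tau>) * exp (L' * \<epsilon>)) \<le> 1 - Fcdf f (Q - \<epsilon>)"
  proof (cases "0 \<le> Q - \<epsilon>")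
    case True
    have "(1 - Fcdf f Q) * exp (hazard_lb f * (Q - (Q - \<epsilon>))) \<le> 1 - Fcdf f (Q - \<epsilon>)"
      using IHR_exp_tail[OF assms(1) True, of Q] assms(4) by simp
    then have "(1 - \<tau>) * exp (hazard_lb f * \<epsilon>) \<le> 1 - Fcdf f (Q - \<epsilon>)"
      using IHR_quant(2)[OF assms(1-3)] unfolding Q_def by simp
    moreover have "exp (L' * \<epsilon>) \<le> exp (hazard_lb f * \<epsilon>)"
      using assms by (simp add: mult_right_mono)
    ultimately show ?thesis using assms(3)
      by (smt (verit) mult_left_mono)
  next
    case False
    then show ?thesis using IHR_F_neg[OF assms(1), of "Q - \<epsilon>"] by simp
  qed
  then show ?thesis using IHR_surv[OF assms(1)] unfolding Q_def by simp
qed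




lemma prod_if_pow:
  assumes "finite I"
  shows "(\<Prod>t\<in>I. if P t then (c::real) else 1) = c ^ card {t\<in>I. P t}"
  using prod.inter_filter[OF assms, of "\<lambda>_. c" P, symmetric] by simp

lemma (in prob_space) indep_expect_prod_if:
  fixes Y :: "'i \<Rightarrow> 'a \<Rightarrow> real"
  assumes I: "finite I" and ind: "indep_vars (\<lambda>_. borel) Y I" and B: "B \<in> sets borel"
  shows "expectation (\<lambda>\<omega>. \<Prod>t\<in>I. if Y t \<omega> \<in> B then w else 1)
       = (\<Prod>t\<in>I. 1 + prob {\<omega>\<in>space M. Y t \<omega> \<in> B} * (w - 1))"
    "integrable M (\<lambda>\<omega>. \<Prod>t\<in>I. if Y t \<omega> \<in> B then w else 1)"
proof -
  define g where "g = (\<lambda>y::real. if y \<in> B then w else (1::real))"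
  have gm: "g \<in> borel_measurable borel" unfolding g_def using B by measurable
  have rv: "\<And>t. t \<in> I \<Longrightarrow> random_variable borel (Y t)"
    using ind unfolding indep_vars_def by auto
  have ind2: "indep_vars (\<lambda>_. borel) (\<lambda>t. g \<circ> Y t) I"
    by (rule indep_vars_compose[OF ind]) (use gm in auto)
  have ev: "\<And>t. t \<in> I \<Longrightarrow> {\<omega>\<in>space M. Y t \<omega> \<in> B} \<in> events"
    using rv B by measurable
  have eq: "\<And>t \<omega>. \<omega> \<in> space M \<Longrightarrow> (g \<circ> Y t) \<omega> = 1 + (w - 1) * indicator {\<omega>\<in>space M. Y t \<omega> \<in> B} \<omega>"
    by (auto simp: g_def indicator_def)
  have int: "\<And>t. t \<in> I \<Longrightarrow> integrable M (g \<circ> Y t)"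
  proof -
    fix t assume t: "t \<in> I"
    have "integrable M (\<lambda>\<omega>. 1 + (w - 1) * indicator {\<omega>\<in>space M. Y t \<omega> \<in> B} \<omega>)"
    proof (rule Bochner_Integration.integrable_add)
      show "integrable M (\<lambda>\<omega>. (1::real))" by simp
      show "integrable M (\<lambda>\<omega>. (w - 1) * indicator {\<omega>\<in>space M. Y t \<omega> \<in> B} \<omega>)"
        using ev[OF t] by (intro integrable_mult_right integrable_real_indicator) (auto simp: emeasure_eq_measure)
    qed
    then show "integrable M (g \<circ> Y t)"
      using Bochner_Integration.integrable_cong[OF refl, of M "g \<circ> Y t" "\<lambda>\<omega>. 1 + (w - 1) * indicator {\<omega>\<in>space M. Y t \<omega> \<in> B} \<omega>"] eq by auto
  qed
  have E: "\<And>t. t \<in> I \<Longrightarrow> expectation (g \<circ> Y t) = 1 + prob {\<omega>\<in>space M. Y t \<omega> \<in> B} * (w - 1)"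
  proof -
    fix t assume t: "t \<in> I"
    have "expectation (g \<circ> Y t) = expectation (\<lambda>\<omega>. 1 + (w - 1) * indicator {\<omega>\<in>space M. Y t \<omega> \<in> B} \<omega>)"
      by (rule Bochner_Integration.integral_cong) (use eq in auto)
    also have "\<dots> = 1 + prob {\<omega>\<in>space M. Y t \<omega> \<in> B} * (w - 1)"
      using ev[OF t] by (subst Bochner_Integration.integral_add) (auto simp: prob_space emeasure_eq_measure intro!: integrable_real_indicator)
    finally show "expectation (g \<circ> Y t) = 1 + prob {\<omega>\<in>space M. Y t \<omega> \<in> B} * (w - 1)" .
  qed
  have "expectation (\<lambda>\<omega>. \<Prod>t\<in>I. (g \<circ> Y t) \<omega>) = (\<Prod>t\<in>I. expectation (g \<circ> Y t))"
    by (rule indep_vars_lebesgue_integral[OF I ind2 int])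
  also have "\<dots> = (\<Prod>t\<in>I. 1 + prob {\<omega>\<in>space M. Y t \<omega> \<in> B} * (w - 1))"
    by (rule prod.cong) (auto simp: E)
  finally show "expectation (\<lambda>\<omega>. \<Prod>t\<in>I. if Y t \<omega> \<in> B then w else 1)
       = (\<Prod>t\<in>I. 1 + prob {\<omega>\<in>space M. Y t \<omega> \<in> B} * (w - 1))"
    by (simp add: g_def o_def)
  show "integrable M (\<lambda>\<omega>. \<Prod>t\<in>I. if Y t \<omega> \<in> B then w else 1)"
    using indep_vars_integrable[OF I ind2 int] by (simp add: g_def o_def)
qed

lemma (in prob_space) chernoff_upper:
  fixes Y :: "'i \<Rightarrow> 'a \<Rightarrow> real"
  assumes I: "finite I" and ind: "indep_vars (\<lambda>_. borel) Y I" and B: "B \<in> sets borel"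
    and s: "0 \<le> s" and p: "\<And>t. t \<in> I \<Longrightarrow> prob {\<omega>\<in>space M. Y t \<omega> \<in> B} \<le> p"
  shows "prob {\<omega>\<in>space M. k \<le> card {t\<in>I. Y t \<omega> \<in> B}}
        \<le> exp (- s * k + real (card I) * p * (exp s - 1))"
proof -
  define u where "u = (\<lambda>\<omega>. \<Prod>t\<in>I. if Y t \<omega> \<in> B then exp s else 1)"
  note E = indep_expect_prod_if[OF I ind B, of "exp s"]
  have u_eq: "u \<omega> = exp s ^ card {t\<in>I. Y t \<omega> \<in> B}" for \<omega>
    unfolding u_def by (rule prod_if_pow[OF I])
  have sub: "{\<omega>\<in>space M. k \<le> card {t\<in>I. Y t \<omega> \<in> B}} \<subseteq> {\<omega>\<in>space M. exp (s * k) \<le> u \<omega>}"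
  proof safe
    fix \<omega> assume "k \<le> card {t\<in>I. Y t \<omega> \<in> B}"
    then have "s * k \<le> s * card {t\<in>I. Y t \<omega> \<in> B}" using s by (simp add: mult_left_mono)
    then show "exp (s * k) \<le> u \<omega>" unfolding u_eq by (simp add: exp_of_nat_mult[symmetric] mult.commute)
  qed
  have "prob {\<omega>\<in>space M. k \<le> card {t\<in>I. Y t \<omega> \<in> B}} \<le> prob {\<omega>\<in>space M. exp (s * k) \<le> u \<omega>}"
    by (rule finite_measure_mono[OF sub]) (use E(2) in \<open>simp add: u_def\<close>)
  also have "\<dots> \<le> expectation u / exp (s * k)"
    by (rule integral_Markov_inequality_measure[where A="space M"]) (use E(2) in \<open>auto simp: u_def intro!: prod_nonneg\<close>)
  also have "expectation u = (\<Prod>t\<in>I. 1 + prob {\<omega>\<in>space M. Y t \<omega> \<in> B} * (exp s - 1))"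
    using E(1) unfolding u_def .
  also have "\<dots> \<le> (\<Prod>t\<in>I. exp (p * (exp s - 1)))"
  proof (rule prod_mono, safe)
    fix t assume t: "t \<in> I"
    have es: "0 \<le> exp s - 1" using s by simp
    show "0 \<le> 1 + prob {\<omega>\<in>space M. Y t \<omega> \<in> B} * (exp s - 1)" using es by simp
    have "1 + prob {\<omega>\<in>space M. Y t \<omega> \<in> B} * (exp s - 1) \<le> 1 + p * (exp s - 1)"
      using p[OF t] es by (simp add: mult_right_mono)
    also have "\<dots> \<le> exp (p * (exp s - 1))" by (rule exp_ge_add_one_self[THEN order_trans[rotated]]) simp
    finally show "1 + prob {\<omega>\<in>space M. Y t \<omega> \<in> B} * (exp s - 1) \<le> exp (p * (exp s - 1))" .
  qed
  also have "\<dots> = exp (real (card I) * p * (exp s - 1))"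
    by (simp add: exp_of_nat_mult[symmetric] mult.assoc)
  finally show ?thesis by (simp add: exp_diff exp_minus divide_inverse mult_ac)
qed

lemma (in prob_space) chernoff_lower:
  fixes Y :: "'i \<Rightarrow> 'a \<Rightarrow> real"
  assumes I: "finite I" and ind: "indep_vars (\<lambda>_. borel) Y I" and B: "B \<in> sets borel"
    and s: "0 \<le> s" and q: "\<And>t. t \<in> I \<Longrightarrow> q \<le> prob {\<omega>\<in>space M. Y t \<omega> \<in> B}" and k: "1 \<le> k"
  shows "prob {\<omega>\<in>space M. card {t\<in>I. Y t \<omega> \<in> B} < k}
        \<le> exp (s * (real k - 1) - real (card I) * q * (1 - exp (- s)))"
proof -
  define u where "u = (\<lambda>\<omega>. \<Prod>t\<in>I. if Y t \<omega> \<in> B then exp (-s) else 1)"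
  note E = indep_expect_prod_if[OF I ind B, of "exp (-s)"]
  have u_eq: "u \<omega> = exp (-s) ^ card {t\<in>I. Y t \<omega> \<in> B}" for \<omega>
    unfolding u_def by (rule prod_if_pow[OF I])
  have sub: "{\<omega>\<in>space M. card {t\<in>I. Y t \<omega> \<in> B} < k} \<subseteq> {\<omega>\<in>space M. exp (- s * (real k - 1)) \<le> u \<omega>}"
  proof safe
    fix \<omega> assume "card {t\<in>I. Y t \<omega> \<in> B} < k"
    then have "real (card {t\<in>I. Y t \<omega> \<in> B}) \<le> real k - 1" using k by linarith
    then have "- s * (real k - 1) \<le> - s * card {t\<in>I. Y t \<omega> \<in> B}" using s by (simp add: mult_left_mono)
    then show "exp (- s * (real k - 1)) \<le> u \<omega>" unfolding u_eq by (simp add: exp_of_nat_mult[symmetric] mult.commute)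
  qed
  have "prob {\<omega>\<in>space M. card {t\<in>I. Y t \<omega> \<in> B} < k} \<le> prob {\<omega>\<in>space M. exp (- s * (real k - 1)) \<le> u \<omega>}"
    by (rule finite_measure_mono[OF sub]) (use E(2) in \<open>simp add: u_def\<close>)
  also have "\<dots> \<le> expectation u / exp (- s * (real k - 1))"
    by (rule integral_Markov_inequality_measure[where A="space M"]) (use E(2) in \<open>auto simp: u_def intro!: prod_nonneg\<close>)
  also have "expectation u = (\<Prod>t\<in>I. 1 + prob {\<omega>\<in>space M. Y t \<omega> \<in> B} * (exp (-s) - 1))"
    using E(1) unfolding u_def .
  also have "\<dots> \<le> (\<Prod>t\<in>I. exp (- q * (1 - exp (-s))))"
  proof (rule prod_mono, safe)
    fix t assume t: "t \<in> I"
    have es: "0 \<le> 1 - exp (-s)" "1 - exp (-s) \<le> 1" using s by auto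
    have pr: "prob {\<omega>\<in>space M. Y t \<omega> \<in> B} \<le> 1" by simp
    show "0 \<le> 1 + prob {\<omega>\<in>space M. Y t \<omega> \<in> B} * (exp (-s) - 1)"
      using mult_mono[OF pr es(2)] es by (simp add: algebra_simps)
    have "1 + prob {\<omega>\<in>space M. Y t \<omega> \<in> B} * (exp (-s) - 1) \<le> 1 + (- q * (1 - exp (-s)))"
      using mult_right_mono[OF q[OF t] es(1)] by (simp add: algebra_simps)
    also have "\<dots> \<le> exp (- q * (1 - exp (-s)))" by (rule exp_ge_add_one_self[THEN order_trans[rotated]]) simp
    finally show "1 + prob {\<omega>\<in>space M. Y t \<omega> \<in> B} * (exp (-s) - 1) \<le> exp (- q * (1 - exp (-s)))" .
  qed
  also have "\<dots> = exp (- real (card I) * q * (1 - exp (- s)))"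
    by (simp add: exp_of_nat_mult[symmetric] mult.assoc)
  finally show ?thesis by (simp add: exp_diff exp_minus divide_inverse mult_ac)
qed




lemma rev_sort_nth_upclosed:
  fixes xs :: "real list"
  assumes P: "\<And>u v. u \<le> v \<Longrightarrow> P u \<Longrightarrow> P v" and j: "1 \<le> j" "j \<le> length xs"
  shows "P (rev (sort xs) ! (j - 1)) \<longleftrightarrow> j \<le> length (filter P xs)"
proof -
  define ys where "ys = sort xs"
  define n where "n = length xs"
  have ly: "length ys = n" unfolding ys_def n_def by simp
  have so: "sorted ys" unfolding ys_def by simp
  have r: "rev ys ! (j - 1) = ys ! (n - j)"
  proof -
    have "j - 1 < length ys" using j ly n_def by simp
    then have "rev ys ! (j - 1) = ys ! (length ys - Suc (j - 1))" by (rule rev_nth)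
    moreover have "length ys - Suc (j - 1) = n - j" using j ly by simp
    ultimately show ?thesis by simp
  qed
  have "length (filter P xs) = length (filter P ys)"
  proof -
    have "mset ys = mset xs" unfolding ys_def by simp
    then have "mset (filter P ys) = mset (filter P xs)" by (simp add: mset_filter)
    then show ?thesis by (metis size_mset)
  qed
  also have "\<dots> = card {i. i < n \<and> P (ys ! i)}" using ly by (simp add: length_filter_conv_card)
  finally have c: "length (filter P xs) = card {i. i < n \<and> P (ys ! i)}" .
  show ?thesis
  proof
    assume h: "P (rev (sort xs) ! (j - 1))"
    then have h': "P (ys ! (n - j))" using r unfolding ys_def by simp
    have "{n - j..<n} \<subseteq> {i. i < n \<and> P (ys ! i)}"
    proof
      fix i assume i: "i \<in> {n - j..<n}"
      then have "ys ! (n - j) \<le> ys ! i" using so ly by (auto intro: sorted_nth_mono)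
      then show "i \<in> {i. i < n \<and> P (ys ! i)}" using P h' i by auto
    qed
    then have "card {n - j..<n} \<le> card {i. i < n \<and> P (ys ! i)}" by (intro card_mono) auto
    then show "j \<le> length (filter P xs)" using c j n_def by simp
  next
    assume h: "j \<le> length (filter P xs)"
    show "P (rev (sort xs) ! (j - 1))"
    proof (rule ccontr)
      assume "\<not> P (rev (sort xs) ! (j - 1))"
      then have h': "\<not> P (ys ! (n - j))" using r unfolding ys_def by simp
      have "{i. i < n \<and> P (ys ! i)} \<subseteq> {n - j + 1..<n}"
      proof
        fix i assume i: "i \<in> {i. i < n \<and> P (ys ! i)}"
        have "n - j < i"
        proof (rule ccontr)
          assume "\<not> n - j < i"
          then have "ys ! i \<le> ys ! (n - j)" using so ly j n_def by (auto intro: sorted_nth_mono)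
          then show False using P i h' by auto
        qed
        then show "i \<in> {n - j + 1..<n}" using i by auto
      qed
      then have "card {i. i < n \<and> P (ys ! i)} \<le> card {n - j + 1..<n}" by (intro card_mono) auto
      then show False using c h j n_def by simp
    qed
  qed
qed

definition kap :: "real \<Rightarrow> nat \<Rightarrow> nat" where
  "kap \<tau> n = max 1 (nat \<lfloor>real n * (1 - \<tau>)\<rfloor>)"

lemma kap_bounds:
  assumes "0 \<le> \<tau>" "\<tau> < 1" "1 \<le> n"
  shows "1 \<le> kap \<tau> n" "kap \<tau> n \<le> n" "real n * (1 - \<tau>) - 1 \<le> real (kap \<tau> n)"
    "real (kap \<tau> n) - 1 \<le> real n * (1 - \<tau>)"
proof -
  have a: "real n * (1 - \<tau>) \<le> real n" using assms by (simp add: mult_left_le)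
  have b: "0 \<le> real n * (1 - \<tau>)" using assms by simp
  show "1 \<le> kap \<tau> n" unfolding kap_def by simp
  have "\<lfloor>real n * (1 - \<tau>)\<rfloor> \<le> int n" using a by linarith
  then show "kap \<tau> n \<le> n" unfolding kap_def using assms by auto
  show "real n * (1 - \<tau>) - 1 \<le> real (kap \<tau> n)" unfolding kap_def using b
    by (simp add: of_nat_max) linarith
  show "real (kap \<tau> n) - 1 \<le> real n * (1 - \<tau>)" unfolding kap_def using b
    by (simp add: of_nat_max) linarith
qed

lemma emp_quantile_kap:
  "emp_quantile \<tau> xs = rev (sort xs) ! (kap \<tau> (length xs) - 1)"
  unfolding emp_quantile_def order_stat_def kap_def by (simp add: max_def)

lemma len_filter_map: "length (filter P (map g [0..<n])) = card {t\<in>{..<n}. P (g t)}"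
proof -
  have "{t\<in>{..<n}. P (g t)} = {i. i < length (map g [0..<n]) \<and> P (map g [0..<n] ! i)}" by auto
  then show ?thesis by (simp only: length_filter_conv_card)
qed

lemma emp_q_up:
  fixes P :: "real \<Rightarrow> bool"
  assumes P: "\<And>u v. u \<le> v \<Longrightarrow> P u \<Longrightarrow> P v" and a: "0 \<le> \<tau>" "\<tau> < 1" "1 \<le> n"
  shows "P (emp_quantile \<tau> (map g [0..<n])) \<longleftrightarrow> kap \<tau> n \<le> card {t\<in>{..<n}. P (g t)}"
proof -
  define xs where "xs = map g [0..<n]"
  have l: "length xs = n" unfolding xs_def by simp
  have k: "1 \<le> kap \<tau> n" "kap \<tau> n \<le> length xs" using kap_bounds[OF a] l by auto
  have "P (emp_quantile \<tau> xs) = P (rev (sort xs) ! (kap \<tau> n - 1))"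
    unfolding emp_quantile_kap l ..
  also have "\<dots> \<longleftrightarrow> kap \<tau> n \<le> length (filter P xs)"
    by (rule rev_sort_nth_upclosed[OF P k])
  also have "length (filter P xs) = card {t\<in>{..<n}. P (g t)}"
    unfolding xs_def by (rule len_filter_map)
  finally show ?thesis unfolding xs_def .
qed

lemma emp_quantile_ge_iff:
  assumes "0 \<le> \<tau>" "\<tau> < 1" "1 \<le> n"
  shows "a \<le> emp_quantile \<tau> (map g [0..<n]) \<longleftrightarrow> kap \<tau> n \<le> card {t\<in>{..<n}. a \<le> g t}"
  by (rule emp_q_up[OF _ assms]) simp

lemma emp_quantile_le_iff:
  assumes "0 \<le> \<tau>" "\<tau> < 1" "1 \<le> n"
  shows "emp_quantile \<tau> (map g [0..<n]) \<le> a \<longleftrightarrow> card {t\<in>{..<n}. a < g t} < kap \<tau> n"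
  using emp_q_up[OF _ assms, of "\<lambda>y. a < y" g] by (auto simp del: not_le)




lemma rank_gt:
  fixes w :: "nat \<Rightarrow> real"
  assumes d: "distinct as" and sa: "set as = A"
    and so: "\<And>i j. i \<le> j \<Longrightarrow> j < length as \<Longrightarrow> w (as ! j) \<le> w (as ! i)"
    and k: "k < length as" and c: "k + 1 \<le> card {a\<in>A. v < w a}"
  shows "v < w (as ! k)"
proof (rule ccontr)
  assume "\<not> v < w (as ! k)"
  then have h: "w (as ! k) \<le> v" by simp
  have "{a\<in>A. v < w a} \<subseteq> (\<lambda>i. as ! i) ` {..<k}"
  proof
    fix a assume a: "a \<in> {a\<in>A. v < w a}"
    then obtain i where i: "i < length as" "a = as ! i" using sa by (auto simp: in_set_conv_nth)
    have "i < k"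
    proof (rule ccontr)
      assume "\<not> i < k"
      then have "w (as ! i) \<le> w (as ! k)" using so i by simp
      then show False using a i h by auto
    qed
    then show "a \<in> (\<lambda>i. as ! i) ` {..<k}" using i by auto
  qed
  then have "card {a\<in>A. v < w a} \<le> card ((\<lambda>i. as ! i) ` {..<k})" by (intro card_mono) auto
  also have "\<dots> \<le> k" using card_image_le[of "{..<k}" "\<lambda>i. as ! i"] by simp
  finally show False using c by simp
qed

lemma rank_lt:
  fixes w :: "nat \<Rightarrow> real"
  assumes d: "distinct as" and sa: "set as = A"
    and so: "\<And>i j. i \<le> j \<Longrightarrow> j < length as \<Longrightarrow> w (as ! j) \<le> w (as ! i)"
    and k: "k < length as" and c: "length as - k \<le> card {a\<in>A. w a < v}"
  shows "w (as ! k) < v"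
proof (rule ccontr)
  assume "\<not> w (as ! k) < v"
  then have h: "v \<le> w (as ! k)" by simp
  have "{a\<in>A. w a < v} \<subseteq> (\<lambda>i. as ! i) ` {k+1..<length as}"
  proof
    fix a assume a: "a \<in> {a\<in>A. w a < v}"
    then obtain i where i: "i < length as" "a = as ! i" using sa by (auto simp: in_set_conv_nth)
    have "k < i"
    proof (rule ccontr)
      assume "\<not> k < i"
      then have "w (as ! k) \<le> w (as ! i)" using so i k by simp
      then show False using a i h by auto
    qed
    then show "a \<in> (\<lambda>i. as ! i) ` {k+1..<length as}" using i by auto
  qed
  then have "card {a\<in>A. w a < v} \<le> card ((\<lambda>i. as ! i) ` {k+1..<length as})" by (intro card_mono) auto
  also have "\<dots> \<le> length as - (k + 1)" using card_image_le[of "{k+1..<length as}" "\<lambda>i. as ! i"] by simp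
  finally show False using c k by simp
qed

lemma sorted_gap_exists:
  fixes Q :: "nat \<Rightarrow> real"
  assumes A: "A \<subseteq> {1..K}" "card A = r" "1 \<le> r"
  shows "\<exists>i\<in>A. sorted_gap K Q S r \<le> gap K Q S i"
proof (rule ccontr)
  assume "\<not> ?thesis"
  then have lt: "\<And>i. i \<in> A \<Longrightarrow> gap K Q S i < sorted_gap K Q S r" by auto
  define gs where "gs = map (gap K Q S) [1..<K+1]"
  define ss where "ss = sort gs"
  define v where "v = ss ! (r - 1)"
  have fA: "finite A" using A finite_subset by blast
  have rK: "r \<le> K" using A card_mono[OF _ A(1)] by fastforce
  have lg: "length gs = K" "length ss = K" unfolding gs_def ss_def by auto
  have gsn: "\<And>i. i \<in> {1..K} \<Longrightarrow> gs ! (i - 1) = gap K Q S i"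
  proof -
    fix i assume i: "i \<in> {1..K}"
    then have "i - 1 < length [1..<K+1]" by auto
    then have "gs ! (i - 1) = gap K Q S ([1..<K+1] ! (i - 1))" unfolding gs_def by (rule nth_map)
    also have "[1..<K+1] ! (i - 1) = i" using i by (subst nth_upt) auto
    finally show "gs ! (i - 1) = gap K Q S i" .
  qed
  have vdef: "sorted_gap K Q S r = v" unfolding sorted_gap_def v_def ss_def gs_def ..
  have "r \<le> card {k. k < K \<and> gs ! k < v}"
  proof -
    have "(\<lambda>i. i - 1) ` A \<subseteq> {k. k < K \<and> gs ! k < v}"
      using A(1) lt gsn vdef by fastforce
    moreover have "inj_on (\<lambda>i. i - 1) A"
    proof (rule inj_onI)
      fix x y assume "x \<in> A" "y \<in> A" "x - 1 = y - 1"
      moreover have "1 \<le> x" "1 \<le> y" using A(1) \<open>x \<in> A\<close> \<open>y \<in> A\<close> by auto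
      ultimately show "x = y" by linarith
    qed
    ultimately show ?thesis using card_mono[of "{k. k < K \<and> gs ! k < v}" "(\<lambda>i. i - 1) ` A"]
      card_image[of "\<lambda>i. i - 1" A] A(2) by auto
  qed
  also have "card {k. k < K \<and> gs ! k < v} = length (filter (\<lambda>y. y < v) gs)"
    using lg by (simp add: length_filter_conv_card)
  also have "\<dots> = length (filter (\<lambda>y. y < v) ss)"
  proof -
    have "mset (filter (\<lambda>y. y < v) ss) = mset (filter (\<lambda>y. y < v) gs)" unfolding ss_def by (simp add: mset_filter)
    then show ?thesis by (metis size_mset)
  qed
  also have "\<dots> = card {k. k < K \<and> ss ! k < v}"
    using lg by (simp add: length_filter_conv_card)
  also have "\<dots> \<le> card {..<r - 1}"
  proof (rule card_mono)
    show "{k. k < K \<and> ss ! k < v} \<subseteq> {..<r - 1}"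
    proof
      fix k assume k: "k \<in> {k. k < K \<and> ss ! k < v}"
      have "k < r - 1"
      proof (rule ccontr)
        assume "\<not> k < r - 1"
        then have "ss ! (r - 1) \<le> ss ! k" using k lg unfolding ss_def by (intro sorted_nth_mono) auto
        then show False using k v_def by simp
      qed
      then show "k \<in> {..<r - 1}" by simp
    qed
  qed simp
  finally show False using A by simp
qed




definition sar_inv :: "nat \<Rightarrow> nat set \<Rightarrow> nat \<Rightarrow> nat set \<times> nat set \<times> nat \<Rightarrow> bool" where
  "sar_inv K S p st = (case st of (A, Acc, l) \<Rightarrow> A \<subseteq> {1..K} \<and> card A = K - p \<and> Acc \<subseteq> S
     \<and> A \<inter> Acc = {} \<and> S \<subseteq> A \<union> Acc \<and> l = card (S \<inter> A) \<and> 1 \<le> l)"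

lemma sar_inv_accept:
  assumes "sar_inv K S p (A, Acc, l)" "a \<in> A" "a \<in> S" "2 \<le> l"
  shows "sar_inv K S (Suc p) (A - {a}, Acc \<union> {a}, l - 1)"
proof -
  have fA: "finite A" using assms(1) unfolding sar_inv_def by (auto intro: finite_subset)
  have "S \<inter> (A - {a}) = (S \<inter> A) - {a}" by auto
  then have "card (S \<inter> (A - {a})) = card (S \<inter> A) - 1" using assms(2,3) fA by simp
  then show ?thesis using assms unfolding sar_inv_def by auto
qed

lemma sar_inv_reject:
  assumes "sar_inv K S p (A, Acc, l)" "a \<in> A" "a \<notin> S"
  shows "sar_inv K S (Suc p) (A - {a}, Acc, l)"
proof -
  have fA: "finite A" using assms(1) unfolding sar_inv_def by (auto intro: finite_subset)
  have "S \<inter> (A - {a}) = S \<inter> A" using assms by auto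
  then show ?thesis using assms fA unfolding sar_inv_def by auto
qed

lemma gap_pos:
  fixes Q :: "nat \<Rightarrow> real"
  assumes SK: "S \<subseteq> {1..K}" "S \<noteq> {}" "{1..K} - S \<noteq> {}"
    and sep: "\<forall>i\<in>S. \<forall>j\<in>{1..K} - S. Q j < Q i"
    and i: "i \<in> {1..K}"
  shows "0 < gap K Q S i"
proof (cases "i \<in> S")
  case True
  have "Max (Q ` ({1..K} - S)) \<in> Q ` ({1..K} - S)" using SK by (intro Max_in) auto
  then show ?thesis using True sep unfolding gap_def by auto
next
  case False
  have "Min (Q ` S) \<in> Q ` S" using SK finite_subset[OF SK(1)] by (intro Min_in) auto
  then show ?thesis using False sep i unfolding gap_def by auto
qed

lemma sorted_gap_pos:
  fixes Q :: "nat \<Rightarrow> real"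
  assumes "\<And>i. i \<in> {1..K} \<Longrightarrow> 0 < gap K Q S i" "1 \<le> j" "j \<le> K"
  shows "0 < sorted_gap K Q S j"
proof -
  define gs where "gs = map (gap K Q S) [1..<K+1]"
  have "sort gs ! (j - 1) \<in> set (sort gs)" using assms unfolding gs_def by (intro nth_mem) auto
  then have "sort gs ! (j - 1) \<in> set gs" by simp
  then obtain i where i: "i \<in> set [1..<K+1]" "sort gs ! (j - 1) = gap K Q S i"
    unfolding gs_def by (auto simp del: upt_Suc)
  have "i \<in> {1..K}" using i(1) by (simp del: upt_Suc) 
  then show ?thesis using assms(1) i(2) unfolding sorted_gap_def gs_def[symmetric] by auto
qed

lemma sar_step:
  fixes Q :: "nat \<Rightarrow> real" and q :: "nat \<Rightarrow> nat \<Rightarrow> real"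
  assumes SK: "S \<subseteq> {1..K}" "S \<noteq> {}" "{1..K} - S \<noteq> {}"
    and sep: "\<forall>i\<in>S. \<forall>j\<in>{1..K} - S. Q j < Q i"
    and inv: "sar_inv K S p (A, Acc, l)" and p: "p + 2 \<le> K"
    and good: "\<forall>i\<in>{1..K}. \<bar>q i (n_phase N K (Suc p)) - Q i\<bar> < sorted_gap K Q S (K - p) / 4"
  shows "sar_inv K S (Suc p) (qsar_phase N K q (Suc p) (A, Acc, l))"
proof -
  define n where "n = n_phase N K (Suc p)"
  define w where "w = (\<lambda>i. q i n)"
  define as where "as = sort_key (\<lambda>i. - q i n) (sorted_list_of_set A)"
  define r where "r = length as"
  define \<delta> where "\<delta> = sorted_gap K Q S (K - p) / 4"
  have AK: "A \<subseteq> {1..K}" and cA: "card A = K - p" and l1: "1 \<le> l" and lS: "l = card (S \<inter> A)"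
    using inv unfolding sar_inv_def by auto
  have fA: "finite A" using AK finite_subset by blast
  have sa: "set as = A" and das: "distinct as" unfolding as_def using fA by auto
  have rA: "r = card A" unfolding r_def using das sa distinct_card by fastforce
  have r2: "2 \<le> r" using rA cA p by simp
  have so: "\<And>i j. i \<le> j \<Longrightarrow> j < r \<Longrightarrow> w (as ! j) \<le> w (as ! i)"
  proof -
    fix i j assume ij: "i \<le> j" "j < r"
    have "sorted (map (\<lambda>i. - q i n) as)" unfolding as_def by (rule sorted_sort_key)
    then have "map (\<lambda>i. - q i n) as ! i \<le> map (\<lambda>i. - q i n) as ! j"
      using ij r_def by (intro sorted_nth_mono) auto
    then show "w (as ! j) \<le> w (as ! i)" using ij r_def by (simp add: w_def)
  qed
  have so': "\<And>i j. i \<le> j \<Longrightarrow> j < length as \<Longrightarrow> w (as ! j) \<le> w (as ! i)" using so r_def by auto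
  have inA: "\<And>k. k < r \<Longrightarrow> as ! k \<in> A" using sa r_def nth_mem by blast
  have top: "\<And>a. a \<in> A \<Longrightarrow> w a \<le> w (as ! 0)"
    using sa so r2 by (auto simp: in_set_conv_nth r_def)
  have bot: "\<And>a. a \<in> A \<Longrightarrow> w (as ! (r - 1)) \<le> w a"
    using sa so r2 by (auto simp: in_set_conv_nth r_def)
  have gp: "\<And>i. i \<in> {1..K} \<Longrightarrow> 0 < gap K Q S i" by (rule gap_pos[OF SK sep])
  have d0: "0 < \<delta>" unfolding \<delta>_def using sorted_gap_pos[OF gp, of "K - p"] p by auto
  have "\<exists>i\<in>A. sorted_gap K Q S (K - p) \<le> gap K Q S i"
    by (rule sorted_gap_exists[OF AK cA]) (use p in auto)
  then obtain istar where ist: "istar \<in> A" "4 * \<delta> \<le> gap K Q S istar"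
    unfolding \<delta>_def by auto
  have gd: "\<And>i. i \<in> A \<Longrightarrow> \<bar>w i - Q i\<bar> < \<delta>" using good AK unfolding w_def n_def \<delta>_def by auto
  define mn where "mn = Min (Q ` S)"
  define mx where "mx = Max (Q ` ({1..K} - S))"
  have fS: "finite S" using SK finite_subset by blast
  have mn_le: "\<And>s. s \<in> S \<Longrightarrow> mn \<le> Q s" unfolding mn_def using fS by auto
  have mx_ge: "\<And>c. c \<in> {1..K} - S \<Longrightarrow> Q c \<le> mx" unfolding mx_def by auto
  have mxmn: "mx < mn"
  proof -
    have "mn \<in> Q ` S" unfolding mn_def using fS SK by (intro Min_in) auto
    moreover have "mx \<in> Q ` ({1..K} - S)" unfolding mx_def using SK by (intro Max_in) auto
    ultimately show ?thesis using sep by auto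
  qed
  have gapS: "\<And>s. s \<in> S \<Longrightarrow> gap K Q S s = Q s - mx" unfolding gap_def mx_def by simp
  have gapC: "\<And>c. c \<notin> S \<Longrightarrow> gap K Q S c = mn - Q c" unfolding gap_def mn_def by simp
  have cSA: "card (S \<inter> A) = l" using lS by simp
  have unf: "qsar_phase N K q (Suc p) (A, Acc, l) =
     (if l = 0 then (A - {as ! (r - 1)}, Acc, l)
      else if r \<le> l then (A - {as ! 0}, Acc \<union> {as ! 0}, l - 1)
      else if w (as ! 0) - w (as ! l) > w (as ! (l - 1)) - w (as ! (r - 1))
           then (A - {as ! 0}, Acc \<union> {as ! 0}, l - 1) else (A - {as ! (r - 1)}, Acc, l))"
    by (simp add: qsar_phase_def Let_def n_def as_def r_def w_def)
  show ?thesis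
  proof (cases "r \<le> l")
    case True
    have "S \<inter> A \<subseteq> A" by auto
    moreover have "card (S \<inter> A) = card A" using True cSA rA card_mono[OF fA, of "S \<inter> A"] by auto
    ultimately have "S \<inter> A = A" using fA by (metis card_subset_eq)
    then have "as ! 0 \<in> S" using inA[of 0] r2 by auto
    moreover have "2 \<le> l" using True r2 by simp
    ultimately have "sar_inv K S (Suc p) (A - {as ! 0}, Acc \<union> {as ! 0}, l - 1)"
      using sar_inv_accept[OF inv inA[of 0]] r2 by simp
    then show ?thesis unfolding unf using True l1 by simp
  next
    case False
    then have lr: "l < r" by simp
    show ?thesis
    proof (cases "w (as ! 0) - w (as ! l) > w (as ! (l - 1)) - w (as ! (r - 1))")
      case True
      have l2: "2 \<le> l"
      proof (rule ccontr)
        assume "\<not> 2 \<le> l"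
        then have "l = 1" using l1 by simp
        moreover have "w (as ! (r - 1)) \<le> w (as ! 1)" by (rule so) (use r2 in auto)
        ultimately show False using True by simp
      qed
      have a1S: "as ! 0 \<in> S"
      proof (rule ccontr)
        assume a1: "as ! 0 \<notin> S"
        have a1A: "as ! 0 \<in> A" using inA r2 by simp
        have Qa1: "Q (as ! 0) \<le> mx" using a1 a1A AK mx_ge by auto
        have SA_ne: "S \<inter> A \<noteq> {}" using cSA l1 by auto
        then obtain s0 where s0: "s0 \<in> S \<inter> A" by auto
        have ws: "\<And>s. s \<in> S \<inter> A \<Longrightarrow> mn - \<delta> < w s"
          using gd mn_le by (smt (verit) IntD1 IntD2)
        have istC: "istar \<notin> S"
        proof
          assume "istar \<in> S"
          then have "mx + 4 * \<delta> \<le> Q istar" using ist gapS by fastforce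
          moreover have "w istar \<le> w (as ! 0)" using top ist by simp
          ultimately show False using gd[OF ist(1)] gd[OF a1A] Qa1 by auto
        qed
        then have Qist: "Q istar \<le> mn - 4 * \<delta>" using ist gapC by fastforce
        have "(S \<inter> A) \<union> {as ! 0} \<subseteq> {a\<in>A. mn - \<delta> < w a}"
          using ws a1A top s0 by (smt (verit) Int_iff Un_iff insert_iff mem_Collect_eq singletonD subsetI)
        then have "card ((S \<inter> A) \<union> {as ! 0}) \<le> card {a\<in>A. mn - \<delta> < w a}"
          by (intro card_mono) (use fA in auto)
        moreover have "card ((S \<inter> A) \<union> {as ! 0}) = l + 1" using a1 cSA fA by simp
        ultimately have c1: "l + 1 \<le> card {a\<in>A. mn - \<delta> < w a}" by simp
        have wl1: "mn - \<delta> < w (as ! l)"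
          by (rule rank_gt[where w=w, OF das sa so']) (use lr r_def c1 in auto)
        have wl: "mn - \<delta> < w (as ! (l - 1))"
          by (rule rank_gt[where w=w, OF das sa so']) (use lr r_def c1 l1 in auto)
        have wr: "w (as ! (r - 1)) < mn - 3 * \<delta>" using bot[OF ist(1)] gd[OF ist(1)] Qist by auto
        have "w (as ! 0) < mx + \<delta>" using gd[OF a1A] Qa1 by auto
        then show False using True wl1 wl wr mxmn by auto
      qed
      have "sar_inv K S (Suc p) (A - {as ! 0}, Acc \<union> {as ! 0}, l - 1)"
        using sar_inv_accept[OF inv inA[of 0]] r2 a1S l2 by simp
      then show ?thesis unfolding unf using True lr l1 by simp
    next
      case False
      have arS: "as ! (r - 1) \<notin> S"
      proof
        assume ar: "as ! (r - 1) \<in> S"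
        have arA: "as ! (r - 1) \<in> A" using inA r2 by simp
        have Qar: "mn \<le> Q (as ! (r - 1))" using ar mn_le by simp
        have cAS: "card (A - S) = r - l"
        proof -
          have "A - S = A - (S \<inter> A)" by auto
          then show ?thesis using fA cSA rA by (simp add: card_Diff_subset)
        qed
        have wc: "\<And>c. c \<in> A - S \<Longrightarrow> w c < mx + \<delta>"
          using gd mx_ge AK by (smt (verit) DiffD1 DiffD2 DiffI subsetD)
        have istS: "istar \<in> S"
        proof (rule ccontr)
          assume "istar \<notin> S"
          then have "Q istar + 4 * \<delta> \<le> mn" using ist gapC by fastforce
          moreover have "w (as ! (r - 1)) \<le> w istar" using bot ist by simp
          ultimately show False using gd[OF ist(1)] gd[OF arA] Qar by auto
        qed
        then have Qist: "mx + 4 * \<delta> \<le> Q istar" using ist gapS by fastforce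
        have war: "w (as ! (r - 1)) < mx + \<delta>"
        proof -
          have "A - S \<noteq> {}"
          proof
            assume "A - S = {}"
            then have "card (A - S) = 0" by (simp only: card.empty)
            then show False using cAS lr by simp
          qed
          then obtain c where "c \<in> A - S" by auto
          then show ?thesis using wc bot by (smt (verit) DiffD1)
        qed
        have "(A - S) \<union> {as ! (r - 1)} \<subseteq> {a\<in>A. w a < mx + \<delta>}"
          using wc war arA by auto
        then have "card ((A - S) \<union> {as ! (r - 1)}) \<le> card {a\<in>A. w a < mx + \<delta>}"
          by (intro card_mono) (use fA in auto)
        moreover have "card ((A - S) \<union> {as ! (r - 1)}) = r - l + 1" using ar cAS fA by simp
        ultimately have c1: "r - l + 1 \<le> card {a\<in>A. w a < mx + \<delta>}" by simp
        have wl1: "w (as ! l) < mx + \<delta>"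
          by (rule rank_lt[where w=w, OF das sa so']) (use lr r_def c1 in auto)
        have wl: "w (as ! (l - 1)) < mx + \<delta>"
          by (rule rank_lt[where w=w, OF das sa so']) (use lr r_def c1 l1 in auto)
        have w1: "mx + 3 * \<delta> < w (as ! 0)" using top[OF ist(1)] gd[OF ist(1)] Qist by auto
        have "mn - \<delta> < w (as ! (r - 1))" using gd[OF arA] Qar by auto
        then show False using False wl1 wl w1 mxmn by auto
      qed
      have "sar_inv K S (Suc p) (A - {as ! (r - 1)}, Acc, l)"
        using sar_inv_reject[OF inv inA[of "r - 1"]] r2 arS by simp
      then show ?thesis unfolding unf using False lr l1 by simp
    qed
  qed
qed

lemma sar_correct:
  fixes Q :: "nat \<Rightarrow> real" and q :: "nat \<Rightarrow> nat \<Rightarrow> real"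
  assumes SK: "S \<subseteq> {1..K}" "S \<noteq> {}" "{1..K} - S \<noteq> {}" and cS: "card S = m"
    and sep: "\<forall>i\<in>S. \<forall>j\<in>{1..K} - S. Q j < Q i"
    and good: "\<forall>p\<in>{1..K-1}. \<forall>i\<in>{1..K}. \<bar>q i (n_phase N K p) - Q i\<bar> < sorted_gap K Q S (K + 1 - p) / 4"
  shows "qsar N K m q = S"
proof -
  have fS: "finite S" using SK finite_subset by blast
  have "0 < card S" using SK(2) fS by (simp add: card_gt_0_iff)
  then have m1: "1 \<le> m" using cS by simp
  have K1: "1 \<le> K" using SK by auto
  have I: "p \<le> K - 1 \<Longrightarrow> sar_inv K S p (qsar_iter N K m q p)" for p
  proof (induction p)
    case 0
    have "S \<inter> {1..K} = S" using SK by auto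
    then show ?case using cS m1 SK unfolding sar_inv_def by auto
  next
    case (Suc p)
    obtain A Acc l where st: "qsar_iter N K m q p = (A, Acc, l)" by (metis prod_cases3)
    have inv: "sar_inv K S p (A, Acc, l)" using Suc st by simp
    have g: "\<forall>i\<in>{1..K}. \<bar>q i (n_phase N K (Suc p)) - Q i\<bar> < sorted_gap K Q S (K - p) / 4"
    proof
      fix i assume i: "i \<in> {1..K}"
      have "Suc p \<in> {1..K-1}" using Suc.prems by auto
      then have "\<bar>q i (n_phase N K (Suc p)) - Q i\<bar> < sorted_gap K Q S (K + 1 - Suc p) / 4"
        using good i by blast
      then show "\<bar>q i (n_phase N K (Suc p)) - Q i\<bar> < sorted_gap K Q S (K - p) / 4" by simp
    qed
    have "p + 2 \<le> K" using Suc.prems by simp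
    from sar_step[where Q=Q and q=q, OF SK sep inv this g] show ?case using st by simp
  qed
  obtain A Acc l where st: "qsar_iter N K m q (K - 1) = (A, Acc, l)" by (metis prod_cases3)
  have inv: "sar_inv K S (K - 1) (A, Acc, l)" using I[of "K - 1"] st by simp
  then have cA: "card A = 1" and l: "l = card (S \<inter> A)" "1 \<le> l" and sub: "Acc \<subseteq> S" "S \<subseteq> A \<union> Acc"
    and AK: "A \<subseteq> {1..K}"
    unfolding sar_inv_def using K1 by auto
  have fA: "finite A" using AK finite_subset by blast
  have "S \<inter> A = A"
    by (rule card_subset_eq[OF fA]) (use cA l card_mono[OF fA, of "S \<inter> A"] in auto)
  then have "A \<union> Acc = S" using sub by auto
  then show ?thesis unfolding qsar_def st by simp
qed




lemma exp_aux: assumes "0 \<le> (x::real)" shows "x\<^sup>2 / 2 \<le> exp x * (x - 1) + 1"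
proof -
  define h where "h = (\<lambda>x::real. exp x * (x - 1) + 1 - x\<^sup>2 / 2)"
  have d: "\<And>t. (h has_real_derivative (t * exp t - t)) (at t)"
    unfolding h_def by (auto intro!: derivative_eq_intros simp: algebra_simps power2_eq_square)
  have "h 0 \<le> h x"
  proof (rule DERIV_nonneg_imp_nondecreasing[OF assms])
    fix t assume t: "0 \<le> t" "t \<le> x"
    show "\<exists>y. DERIV h t :> y \<and> 0 \<le> y"
      using d[of t] t mult_left_mono[of 1 "exp t" t] by (intro exI[of _ "t * exp t - t"]) auto
  qed
  then show ?thesis unfolding h_def by simp
qed

lemma g_lower: assumes "0 \<le> (x::real)" shows "x\<^sup>2 * exp (-x) / 2 \<le> x - 1 + exp (-x)"
proof -
  have "x\<^sup>2 / 2 \<le> exp x * (x - 1) + 1" by (rule exp_aux[OF assms])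
  then have "x\<^sup>2 / 2 * exp (-x) \<le> (exp x * (x - 1) + 1) * exp (-x)" by (simp add: mult_right_mono)
  also have "\<dots> = x - 1 + exp (-x)" by (simp add: algebra_simps exp_minus)
  finally show ?thesis by simp
qed

lemma upper_arith:
  fixes x \<tau> \<nu> T k :: real
  assumes x: "0 < x" and tau: "0 < \<tau>" "\<tau> < 1" and e: "exp (4 * x) * (1 - \<tau>) \<le> 1"
    and T2: "2 \<le> T" and TD: "T * (8 * (1 + \<tau>) / ((1 - \<tau>) * x\<^sup>2) + 16 / (3 * x)) \<le> \<nu>"
    and k: "\<nu> - 1 \<le> k"
  shows "- x * k + \<nu> * (1 - exp (- x)) \<le> - T"
proof -
  define D where "D = 8 * (1 + \<tau>) / ((1 - \<tau>) * x\<^sup>2) + 16 / (3 * x)"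
  define g where "g = x - 1 + exp (-x)"
  have D1: "8 / ((1 - \<tau>) * x\<^sup>2) \<le> D" unfolding D_def using x tau
    by (intro add_increasing2) (auto intro!: divide_right_mono)
  have ge: "8 * exp (4 * x) / x\<^sup>2 \<le> 8 / ((1 - \<tau>) * x\<^sup>2)"
  proof -
    have "exp (4 * x) \<le> 1 / (1 - \<tau>)" using e tau by (simp add: le_divide_eq)
    then have "8 * exp (4 * x) \<le> 8 / (1 - \<tau>)" by simp
    then have "8 * exp (4 * x) / x\<^sup>2 \<le> (8 / (1 - \<tau>)) / x\<^sup>2" by (rule divide_right_mono) simp
    then show ?thesis by (simp add: divide_divide_eq_left)
  qed
  have gl: "x\<^sup>2 * exp (-x) / 2 \<le> g" unfolding g_def using g_lower x by simp
  have D0: "0 < D" unfolding D_def using x tau by (intro add_pos_pos) auto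
  have "4 * exp (3 * x) = (8 * exp (4 * x) / x\<^sup>2) * (x\<^sup>2 * exp (-x) / 2)"
  proof -
    have "exp (3 * x) = exp (-x) * exp (4 * x)" by (subst exp_add[symmetric]) simp
    then show ?thesis using x by (simp add: field_simps power2_eq_square)
  qed
  also have "\<dots> \<le> D * g"
    using ge D1 gl x D0 by (intro mult_mono) auto
  finally have Dg: "4 * exp (3 * x) \<le> D * g" .
  have "1 + 3 * x \<le> exp (3 * x)" using exp_ge_add_one_self[of "3 * x"] by simp
  then have Dg2: "1 + x / 2 \<le> D * g" using Dg x by linarith
  have TD': "T \<le> \<nu> / D" using TD D0 unfolding D_def[symmetric] by (simp add: le_divide_eq)
  have "\<nu> * g \<ge> \<nu> / D * (1 + x / 2)"
  proof -
    have "\<nu> / D * (1 + x / 2) \<le> \<nu> / D * (D * g)"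
      using Dg2 TD' T2 by (intro mult_left_mono) auto
    also have "\<dots> = \<nu> * g" using D0 by simp
    finally show ?thesis .
  qed
  then have "\<nu> * g \<ge> T + x"
  proof -
    have "\<nu> / D * (1 + x / 2) = \<nu> / D + \<nu> / D * (x / 2)" by (simp add: algebra_simps)
    moreover have "2 * (x / 2) \<le> \<nu> / D * (x / 2)" using TD' T2 x by (intro mult_right_mono) auto
    ultimately show ?thesis using \<open>\<nu> * g \<ge> \<nu> / D * (1 + x / 2)\<close> TD' by linarith
  qed
  moreover have "- x * k \<le> - x * (\<nu> - 1)" using k x by simp
  ultimately show ?thesis unfolding g_def by (simp add: algebra_simps)
qed

lemma lower_arith:
  fixes x \<tau> \<nu> T k :: real
  assumes x: "0 < x" and tau: "0 < \<tau>" "\<tau> < 1"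
    and T0: "0 \<le> T" and TD: "T * (8 * (1 + \<tau>) / ((1 - \<tau>) * x\<^sup>2) + 16 / (3 * x)) \<le> \<nu>"
    and k: "k - 1 \<le> \<nu>" and \<nu>: "0 \<le> \<nu>"
  shows "x * (k - 1) - \<nu> * (exp x - 1) \<le> - T"
proof -
  have a: "T * (8 / x\<^sup>2) \<le> \<nu>"
  proof -
    have "8 / x\<^sup>2 \<le> 8 * (1 + \<tau>) / ((1 - \<tau>) * x\<^sup>2) + 16 / (3 * x)"
    proof -
      have "8 / x\<^sup>2 \<le> 8 * (1 + \<tau>) / ((1 - \<tau>) * x\<^sup>2)"
        using x tau by (simp add: field_simps)
      moreover have "0 \<le> 16 / (3 * x)" using x by simp
      ultimately show ?thesis by linarith
    qed
    then show ?thesis using TD T0 by (meson mult_left_mono order_trans)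
  qed
  have "1 + x + x\<^sup>2 / 2 \<le> exp x" using exp_lower_Taylor_quadratic x by simp
  then have "\<nu> * (x + x\<^sup>2 / 2) \<le> \<nu> * (exp x - 1)" using \<nu> by (intro mult_left_mono) auto
  moreover have "x * (k - 1) \<le> x * \<nu>" using k x by simp
  moreover have "T \<le> \<nu> * x\<^sup>2 / 8" using a x by (simp add: field_simps)
  moreover have "0 \<le> \<nu> * x\<^sup>2" using \<nu> by simp
  ultimately show ?thesis by (simp add: algebra_simps)
qed




lemma arm_tail:
  fixes M :: "'w measure" and Y :: "nat \<Rightarrow> 'w \<Rightarrow> real"
  assumes P: "prob_space M" and g: "IHR g"
    and ind: "prob_space.indep_vars M (\<lambda>_. borel) Y {..<n}"
    and dist: "\<And>t. t < n \<Longrightarrow> distr M borel (Y t) = dens_meas g"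
    and n: "1 \<le> n" and tau: "0 < \<tau>" "\<tau> < 1" and Lm: "0 < Lm" "Lm \<le> hazard_lb g"
    and \<delta>: "0 < \<delta>" and e: "exp (4 * (Lm * \<delta>)) * (1 - \<tau>) \<le> 1" and T2: "2 \<le> T"
    and TW: "T * (8 * (1 + \<tau>) / ((1 - \<tau>) * (Lm * \<delta>)\<^sup>2) + 16 / (3 * (Lm * \<delta>))) \<le> real n * (1 - \<tau>)"
  shows "measure M {\<omega>\<in>space M. kap \<tau> n \<le> card {t\<in>{..<n}. quantile g \<tau> + \<delta> \<le> Y t \<omega>}} \<le> exp (- T)"
    "measure M {\<omega>\<in>space M. card {t\<in>{..<n}. quantile g \<tau> - \<delta> < Y t \<omega>} < kap \<tau> n} \<le> exp (- T)"
proof -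
  interpret prob_space M by (rule P)
  define x where "x = Lm * \<delta>"
  define Q where "Q = quantile g \<tau>"
  define \<nu> where "\<nu> = real n * (1 - \<tau>)"
  have x0: "0 < x" unfolding x_def using Lm \<delta> by simp
  have rv: "\<And>t. t < n \<Longrightarrow> Y t \<in> borel_measurable M"
    using ind unfolding indep_vars_def by auto
  have pr: "\<And>t (B::real set). t < n \<Longrightarrow> B \<in> sets borel \<Longrightarrow> prob {\<omega>\<in>space M. Y t \<omega> \<in> B} = measure (dens_meas g) B"
  proof -
    fix t and B :: "real set" assume t: "t < n" and B: "B \<in> sets borel"
    have "measure (dens_meas g) B = measure (distr M borel (Y t)) B" using dist[OF t] by simp
    also have "\<dots> = measure M (Y t -` B \<inter> space M)" using rv[OF t] B by (rule measure_distr)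
    also have "Y t -` B \<inter> space M = {\<omega>\<in>space M. Y t \<omega> \<in> B}" by auto
    finally show "prob {\<omega>\<in>space M. Y t \<omega> \<in> B} = measure (dens_meas g) B" by simp
  qed
  have kb: "1 \<le> kap \<tau> n" "real n * (1 - \<tau>) - 1 \<le> real (kap \<tau> n)" "real (kap \<tau> n) - 1 \<le> real n * (1 - \<tau>)"
    using kap_bounds[of \<tau> n] tau n by auto
  have ex1: "exp x \<le> exp (4 * x)" using x0 by simp
  have "prob {\<omega>\<in>space M. kap \<tau> n \<le> card {t\<in>{..<n}. Y t \<omega> \<in> {Q + \<delta>..}}}
        \<le> exp (- x * kap \<tau> n + real (card {..<n}) * ((1 - \<tau>) * exp (- x)) * (exp x - 1))"
  proof (rule chernoff_upper[OF _ ind])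
    fix t assume "t \<in> {..<n}"
    then show "prob {\<omega>\<in>space M. Y t \<omega> \<in> {Q + \<delta>..}} \<le> (1 - \<tau>) * exp (- x)"
      using pr[of t "{Q + \<delta>..}"] IHR_upper_tail[OF g tau, of \<delta> Lm] \<delta> Lm
      unfolding Q_def x_def by simp
  qed (use x0 in auto)
  also have "\<dots> = exp (- x * kap \<tau> n + \<nu> * (1 - exp (- x)))"
    unfolding \<nu>_def by (simp add: algebra_simps exp_minus field_simps)
  also have "\<dots> \<le> exp (- T)"
    by (subst exp_le_cancel_iff, rule upper_arith[OF x0 tau _ T2])
       (use e TW kb in \<open>auto simp: x_def \<nu>_def\<close>)
  finally show "measure M {\<omega>\<in>space M. kap \<tau> n \<le> card {t\<in>{..<n}. quantile g \<tau> + \<delta> \<le> Y t \<omega>}} \<le> exp (- T)"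
    unfolding Q_def by simp
  have q1: "(1 - \<tau>) * exp x \<le> 1"
  proof -
    have "exp x * (1 - \<tau>) \<le> exp (4 * x) * (1 - \<tau>)" using ex1 tau by (intro mult_right_mono) auto
    then show ?thesis using e unfolding x_def by (simp add: mult.commute)
  qed
  have "prob {\<omega>\<in>space M. card {t\<in>{..<n}. Y t \<omega> \<in> {Q - \<delta><..}} < kap \<tau> n}
        \<le> exp (x * (real (kap \<tau> n) - 1) - real (card {..<n}) * ((1 - \<tau>) * exp x) * (1 - exp (- x)))"
  proof (rule chernoff_lower[OF _ ind])
    fix t assume "t \<in> {..<n}"
    then show "(1 - \<tau>) * exp x \<le> prob {\<omega>\<in>space M. Y t \<omega> \<in> {Q - \<delta><..}}"
      using pr[of t "{Q - \<delta><..}"] IHR_lower_tail[OF g tau, of \<delta> Lm] \<delta> Lm q1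
      unfolding Q_def x_def by simp
  qed (use x0 kb in auto)
  also have "\<dots> = exp (x * (real (kap \<tau> n) - 1) - \<nu> * (exp x - 1))"
    unfolding \<nu>_def by (simp add: algebra_simps exp_minus field_simps)
  also have "\<dots> \<le> exp (- T)"
    by (subst exp_le_cancel_iff, rule lower_arith[OF x0 tau])
       (use e TW kb T2 tau in \<open>auto simp: x_def \<nu>_def\<close>)
  finally show "measure M {\<omega>\<in>space M. card {t\<in>{..<n}. quantile g \<tau> - \<delta> < Y t \<omega>} < kap \<tau> n} \<le> exp (- T)"
    unfolding Q_def by simp
qed




lemma (in prob_space) indep_sets_reindex:
  assumes inj: "inj_on f I" and ind: "indep_sets F (f ` I)"
  shows "indep_sets (\<lambda>i. F (f i)) I"
  unfolding indep_sets_def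
proof (intro conjI ballI allI impI)
  fix i assume "i \<in> I"
  then show "F (f i) \<subseteq> events" using ind unfolding indep_sets_def by auto
next
  fix J A assume J: "J \<subseteq> I" "J \<noteq> {}" "finite J" and A: "A \<in> Pi J (\<lambda>i. F (f i))"
  define A' where "A' = (\<lambda>y. A (inv_into J f y))"
  have injJ: "inj_on f J" using inj J(1) by (rule inj_on_subset)
  have A'f: "\<And>j. j \<in> J \<Longrightarrow> A' (f j) = A j" unfolding A'_def using injJ by simp
  have "A' \<in> Pi (f ` J) F" using A A'f by auto
  moreover have "f ` J \<subseteq> f ` I" "f ` J \<noteq> {}" "finite (f ` J)" using J by auto
  ultimately have "prob (\<Inter>y\<in>f ` J. A' y) = (\<Prod>y\<in>f ` J. prob (A' y))"
    using ind unfolding indep_sets_def by blast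
  moreover have "(\<Inter>y\<in>f ` J. A' y) = (\<Inter>j\<in>J. A j)" using A'f by auto
  moreover have "(\<Prod>y\<in>f ` J. prob (A' y)) = (\<Prod>j\<in>J. prob (A j))"
    using prod.reindex[OF injJ, of "\<lambda>y. prob (A' y)"] A'f by simp
  ultimately show "prob (\<Inter>j\<in>J. A j) = (\<Prod>j\<in>J. prob (A j))" by simp
qed

lemma (in prob_space) indep_vars_arm:
  fixes X :: "nat \<Rightarrow> nat \<Rightarrow> 'a \<Rightarrow> real"
  assumes ind: "indep_vars (\<lambda>_. borel) (\<lambda>(i,k). X i k) ({1..K} \<times> UNIV)" and i: "i \<in> {1..K}"
  shows "indep_vars (\<lambda>_. borel) (X i) J"
proof -
  have "indep_vars (\<lambda>_. borel) (\<lambda>(i,k). X i k) ((\<lambda>t. (i, t)) ` J)"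
    by (rule indep_vars_subset[OF ind]) (use i in auto)
  then have rv: "\<forall>y\<in>(\<lambda>t. (i, t)) ` J. random_variable borel ((\<lambda>(i,k). X i k) y)"
    and isx: "indep_sets (\<lambda>y. {(\<lambda>(i,k). X i k) y -` A \<inter> space M | A. A \<in> sets borel}) ((\<lambda>t. (i, t)) ` J)"
    unfolding indep_vars_def2 by auto
  have inj: "inj_on (\<lambda>t. (i, t)) J" by (auto intro: inj_onI)
  have "indep_sets (\<lambda>t. (\<lambda>y. {(\<lambda>(i,k). X i k) y -` A \<inter> space M | A. A \<in> sets borel}) ((\<lambda>t. (i, t)) t)) J"
    by (rule indep_sets_reindex[OF inj isx])
  then show ?thesis unfolding indep_vars_def2 using rv by auto
qed

lemma TW_lemma:
  fixes Lm \<Delta> bb \<tau> j lg NK n H :: real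
  assumes Lm: "0 < Lm" and \<Delta>: "0 < \<Delta>" and bb: "0 \<le> bb" and tau: "0 < \<tau>" "\<tau> < 1"
    and j: "1 \<le> j" and lg: "0 < lg" and NK: "0 < NK"
    and hH: "8 * j / (1 - \<tau>) * (4 * (4 * (1 + \<tau>) / (1 - \<tau>)) / (Lm\<^sup>2 * \<Delta>\<^sup>2)
              + 4/3 * (2 * Lm + bb * (1 - \<tau>) * Lm\<^sup>2) / (Lm\<^sup>2 * \<Delta>)) \<le> H"
    and hn: "NK / (lg * j) \<le> n"
  shows "NK / (lg * H) * (8 * (1 + \<tau>) / ((1 - \<tau>) * (Lm * (\<Delta> / 4))\<^sup>2) + 16 / (3 * (Lm * (\<Delta> / 4))))
         \<le> n * (1 - \<tau>)"
proof -
  define x where "x = Lm * (\<Delta> / 4)"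
  have x0: "0 < x" unfolding x_def using Lm \<Delta> by simp
  define W where "W = 8 * (1 + \<tau>) / ((1 - \<tau>) * x\<^sup>2) + 16 / (3 * x)"
  have W0: "0 < W" unfolding W_def using x0 tau by (intro add_pos_pos) auto
  have e1: "4 * (4 * (1 + \<tau>) / (1 - \<tau>)) / (Lm\<^sup>2 * \<Delta>\<^sup>2) = (1 + \<tau>) / ((1 - \<tau>) * x\<^sup>2)"
    unfolding x_def using Lm \<Delta> tau by (simp add: field_simps power2_eq_square)
  have e2: "2 / (3 * x) \<le> 4/3 * (2 * Lm + bb * (1 - \<tau>) * Lm\<^sup>2) / (Lm\<^sup>2 * \<Delta>)"
  proof -
    have "2 / (3 * x) = (8 * Lm / 3) / (Lm\<^sup>2 * \<Delta>)"
      unfolding x_def using Lm \<Delta> by (simp add: field_simps power2_eq_square)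
    also have "\<dots> \<le> 4/3 * (2 * Lm + bb * (1 - \<tau>) * Lm\<^sup>2) / (Lm\<^sup>2 * \<Delta>)"
      using Lm \<Delta> bb tau by (intro divide_right_mono) auto
    finally show ?thesis .
  qed
  have "j / (1 - \<tau>) * W = 8 * j / (1 - \<tau>) * ((1 + \<tau>) / ((1 - \<tau>) * x\<^sup>2) + 2 / (3 * x))"
    unfolding W_def by (simp add: field_simps)
  also have "\<dots> \<le> H"
    using hH e1 e2 tau j by (smt (verit) divide_nonneg_pos mult_left_mono)
  finally have jW: "j / (1 - \<tau>) * W \<le> H" .
  have jW0: "0 < j / (1 - \<tau>) * W" using j tau W0 by simp
  have H0: "0 < H" using jW jW0 by linarith
  have "NK / (lg * H) * W \<le> NK / (lg * (j / (1 - \<tau>) * W)) * W"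
    using jW jW0 lg NK W0 j tau H0 by (intro mult_right_mono divide_left_mono mult_left_mono mult_pos_pos) auto
  also have "\<dots> = NK / (lg * j) * (1 - \<tau>)" using W0 tau j lg by (simp add: field_simps)
  also have "\<dots> \<le> n * (1 - \<tau>)" using hn tau by (intro mult_right_mono) auto
  finally show ?thesis unfolding W_def x_def .
qed

lemma gap_le_Q:
  fixes Q :: "nat \<Rightarrow> real"
  assumes SK: "S \<subseteq> {1..K}" "S \<noteq> {}" "{1..K} - S \<noteq> {}" and Q0: "\<And>i. i \<in> {1..K} \<Longrightarrow> 0 \<le> Q i"
    and j: "1 \<le> j" "j \<le> K"
  shows "\<exists>k\<in>{1..K}. sorted_gap K Q S j \<le> Q k"
proof -
  define gs where "gs = map (gap K Q S) [1..<K+1]"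
  have "sort gs ! (j - 1) \<in> set (sort gs)" using j unfolding gs_def by (intro nth_mem) auto
  then have "sort gs ! (j - 1) \<in> set gs" by simp
  then obtain i where i: "i \<in> set [1..<K+1]" "sort gs ! (j - 1) = gap K Q S i"
    unfolding gs_def by (auto simp del: upt_Suc)
  have iK: "i \<in> {1..K}" using i(1) by (simp del: upt_Suc)
  have fS: "finite S" using SK finite_subset by blast
  have sg: "sorted_gap K Q S j = gap K Q S i" using i(2) unfolding sorted_gap_def gs_def .
  show ?thesis
  proof (cases "i \<in> S")
    case True
    have "Max (Q ` ({1..K} - S)) \<in> Q ` ({1..K} - S)" using SK by (intro Max_in) auto
    then have "0 \<le> Max (Q ` ({1..K} - S))" using Q0 by auto
    then show ?thesis using True sg iK unfolding gap_def by (intro bexI[of _ i]) auto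
  next
    case False
    have "Min (Q ` S) \<in> Q ` S" using SK fS by (intro Min_in) auto
    then obtain s where s: "s \<in> S" "Min (Q ` S) = Q s" by auto
    then show ?thesis using False sg iK Q0 SK unfolding gap_def by (intro bexI[of _ s]) auto
  qed
qed




lemma card_filter_sum: "real (card {t\<in>{..<n::nat}. P t}) = (\<Sum>t<n. if P t then 1 else (0::real))"
proof -
  have "card {t\<in>{..<n}. P t} = (\<Sum>t\<in>{t\<in>{..<n}. P t}. 1)" by simp
  also have "\<dots> = (\<Sum>t<n. if P t then 1 else (0::nat))" by (rule sum.inter_filter) (rule finite_lessThan)
  finally show ?thesis by (simp add: of_nat_sum if_distrib cong: if_cong)
qed

lemma cnt_meas:
  fixes X :: "nat \<Rightarrow> 'a \<Rightarrow> real"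
  assumes rv: "\<And>t. X t \<in> borel_measurable M"
  shows "{\<omega>\<in>space M. k \<le> card {t\<in>{..<n}. a \<le> X t \<omega>}} \<in> sets M"
    "{\<omega>\<in>space M. card {t\<in>{..<n}. a < X t \<omega>} < k} \<in> sets M"
proof -
  have "{\<omega>\<in>space M. k \<le> card {t\<in>{..<n}. a \<le> X t \<omega>}}
      = {\<omega>\<in>space M. real k \<le> (\<Sum>t<n. if a \<le> X t \<omega> then 1 else (0::real))}"
    by (simp only: card_filter_sum[symmetric] of_nat_le_iff)
  also have "\<dots> \<in> sets M" using rv by measurable
  finally show "{\<omega>\<in>space M. k \<le> card {t\<in>{..<n}. a \<le> X t \<omega>}} \<in> sets M" .
  have "{\<omega>\<in>space M. card {t\<in>{..<n}. a < X t \<omega>} < k}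
      = {\<omega>\<in>space M. (\<Sum>t<n. if a < X t \<omega> then 1 else (0::real)) < real k}"
    by (simp only: card_filter_sum[symmetric] of_nat_less_iff)
  also have "\<dots> \<in> sets M" using rv by measurable
  finally show "{\<omega>\<in>space M. card {t\<in>{..<n}. a < X t \<omega>} < k} \<in> sets M" .
qed




theorem theorem4:
  fixes M :: "'w measure" and X :: "nat \<Rightarrow> nat \<Rightarrow> 'w \<Rightarrow> real"
    and f :: "nat \<Rightarrow> real \<Rightarrow> real" and b :: "nat \<Rightarrow> real"
    and K m N :: nat and \<tau> :: real and Sstar :: "nat set"
  assumes P: "prob_space M"
    and K: "K \<ge> 2" and m: "1 \<le> m" "m < K"
    and tau: "0 < \<tau>" "\<tau> < 1"
    and budget: "real N \<ge> 4 / (1 - \<tau>) * logbar K + real K"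
    and ihr: "\<forall>i\<in>{1..K}. IHR (f i) \<and> C1_density (f i)"
    and rv: "\<forall>i\<in>{1..K}. \<forall>k. X i k \<in> borel_measurable M"
    and distr: "\<forall>i\<in>{1..K}. \<forall>k. distr M borel (X i k) = dens_meas (f i)"
    and indep: "prob_space.indep_vars M (\<lambda>_. borel) (\<lambda>(i,k). X i k) ({1..K} \<times> UNIV)"
    and bias: "\<forall>i\<in>{1..K}. 0 \<le> b i \<and> (\<forall>n\<ge>1.
        \<bar>prob_space.expectation M (\<lambda>\<omega>. emp_quantile \<tau> (map (\<lambda>k. X i k \<omega>) [0..<n]))
          - quantile (f i) \<tau>\<bar> \<le> b i / real n)"
    and Sstar: "Sstar \<subseteq> {1..K}" "card Sstar = m"
      "\<forall>i\<in>Sstar. \<forall>j\<in>{1..K} - Sstar. quantile (f j) \<tau> < quantile (f i) \<tau>"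
  shows "measure M {\<omega>\<in>space M.
           qsar N K m (\<lambda>i n. emp_quantile \<tau> (map (\<lambda>k. X i k \<omega>) [0..<n])) \<noteq> Sstar}
         \<le> 2 * real K ^ 2 * exp (- (real N - real K) /
              (logbar K * H_tau K \<tau> (\<lambda>i. quantile (f i) \<tau>) Sstar (\<lambda>i. hazard_lb (f i)) b))"
proof -
  interpret P: prob_space M by (rule P)
  define Q where "Q = (\<lambda>i. quantile (f i) \<tau>)"
  define L where "L = (\<lambda>i. hazard_lb (f i))"
  define H where "H = H_tau K \<tau> Q Sstar L b"
  define T where "T = (real N - real K) / (logbar K * H)"
  define qq where "qq = (\<lambda>\<omega> i n. emp_quantile \<tau> (map (\<lambda>k. X i k \<omega>) [0..<n]))"
  define bad where "bad = {\<omega>\<in>space M. qsar N K m (qq \<omega>) \<noteq> Sstar}"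
  have goal_eq: "exp (- (real N - real K) / (logbar K * H_tau K \<tau> (\<lambda>i. quantile (f i) \<tau>) Sstar (\<lambda>i. hazard_lb (f i)) b)) = exp (- T)"
    unfolding T_def H_def Q_def L_def by (simp add: minus_divide_left)
  have bad_eq: "{\<omega>\<in>space M. qsar N K m (\<lambda>i n. emp_quantile \<tau> (map (\<lambda>k. X i k \<omega>) [0..<n])) \<noteq> Sstar} = bad"
    unfolding bad_def qq_def ..
  have main: "measure M bad \<le> 2 * real K ^ 2 * exp (- T)"
  proof (cases "1 \<le> 2 * real K ^ 2 * exp (- T)")
    case True
    then show ?thesis using P.prob_le_1[of bad] by linarith
  next
    case False
    have K2: "2 \<le> K" and m1: "1 \<le> m" and mK: "m < K" using K m by auto
    have fS: "finite Sstar" using Sstar(1) finite_subset by blast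
    have S_ne: "Sstar \<noteq> {}" using Sstar(2) m1 by auto
    have C_ne: "{1..K} - Sstar \<noteq> {}"
    proof
      assume "{1..K} - Sstar = {}"
      then have "{1..K} \<subseteq> Sstar" by auto
      then have "card {1..K} \<le> card Sstar" using fS by (rule card_mono[rotated])
      then show False using Sstar(2) mK by simp
    qed
    have sep: "\<forall>i\<in>Sstar. \<forall>j\<in>{1..K} - Sstar. Q j < Q i" using Sstar(3) unfolding Q_def by auto
    have ihr': "\<And>i. i \<in> {1..K} \<Longrightarrow> IHR (f i)" using ihr by auto
    have Q0: "\<And>i. i \<in> {1..K} \<Longrightarrow> 0 \<le> Q i" unfolding Q_def using IHR_quant(1)[OF ihr' tau] by auto
    have QL: "\<And>i. i \<in> {1..K} \<Longrightarrow> Q i * L i \<le> - ln (1 - \<tau>)"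
      unfolding Q_def L_def using IHR_QL[OF ihr' tau] by auto
    have Lpos: "\<And>i. i \<in> {1..K} \<Longrightarrow> 0 < L i" unfolding L_def using ihr' unfolding IHR_def by auto
    have "Min (L ` {1..K}) \<in> L ` {1..K}" using K2 by (intro Min_in) auto
    then obtain i0 where i0: "i0 \<in> {1..K}" "L i0 = Min (L ` {1..K})" by auto
    define Lm where "Lm = L i0"
    have Lm_le: "\<And>i. i \<in> {1..K} \<Longrightarrow> Lm \<le> L i" unfolding Lm_def i0(2) by auto
    have Lm0: "0 < Lm" unfolding Lm_def using Lpos[OF i0(1)] .
    have lg: "0 < logbar K"
    proof -
      have "0 \<le> (\<Sum>i=2..K. 1 / real i)" by (intro sum_nonneg) auto
      then show ?thesis unfolding logbar_def by simp
    qed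
    have NK: "0 < real N - real K"
    proof -
      have "0 < 4 / (1 - \<tau>) * logbar K" using lg tau by simp
      then show ?thesis using budget by linarith
    qed
    have Hterm: "
        8 * real j / (1 - \<tau>) * (4 * (4 * (1 + \<tau>) / (1 - \<tau>)) / ((L i0)\<^sup>2 * (sorted_gap K Q Sstar j)\<^sup>2)
              + 4/3 * (2 * L i0 + b i0 * (1 - \<tau>) * (L i0)\<^sup>2) / ((L i0)\<^sup>2 * sorted_gap K Q Sstar j)) \<le> H"
      if j: "j \<in> {1..K}" for j
    proof -
      show ?thesis unfolding H_def H_tau_def Let_def
        apply (rule Max_ge)
         apply simp
        apply (rule rev_image_eqI[of "(i0, j)"])
        using i0(1) j apply simp
        apply simp
        done
    qed
    have T2: "2 \<le> T"
    proof (rule ccontr)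
      assume "\<not> 2 \<le> T"
      then have a: "exp (- 2) \<le> exp (- T)" by simp
      have b: "8 \<le> 2 * real K ^ 2"
      proof -
        have "2 * 2 \<le> real K * real K" using K2 by (intro mult_mono) auto
        then show ?thesis by (simp add: power2_eq_square)
      qed
      have c: "1 \<le> 8 * exp (- 2::real)"
      proof -
        have "exp (2::real) = exp 1 * exp 1" by (simp add: mult_exp_exp)
        also have "\<dots> \<le> (272/100) * (272/100)" using e_less_272 by (intro mult_mono) auto
        finally have "exp (2::real) \<le> 8" by simp
        then show ?thesis by (simp add: exp_minus field_simps)
      qed
      have "8 * exp (- 2::real) \<le> 2 * real K ^ 2 * exp (- 2)" using b by (intro mult_right_mono) auto
      also have "\<dots> \<le> 2 * real K ^ 2 * exp (- T)" using a by (intro mult_left_mono) auto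
      finally show False using c False by linarith
    qed
    define np where "np = (\<lambda>p. n_phase N K p)"
    define \<delta> where "\<delta> = (\<lambda>p. sorted_gap K Q Sstar (K + 1 - p) / 4)"
    define U where "U = (\<lambda>p i. {\<omega>\<in>space M. kap \<tau> (np p) \<le> card {t\<in>{..<np p}. Q i + \<delta> p \<le> X i t \<omega>}})"
    define Lo where "Lo = (\<lambda>p i. {\<omega>\<in>space M. card {t\<in>{..<np p}. Q i - \<delta> p < X i t \<omega>} < kap \<tau> (np p)})"
    have gp: "\<And>i. i \<in> {1..K} \<Longrightarrow> 0 < gap K Q Sstar i" by (rule gap_pos[OF Sstar(1) S_ne C_ne sep])
    have phase: "1 \<le> np p \<and> 0 < \<delta> p
        \<and> exp (4 * (Lm * \<delta> p)) * (1 - \<tau>) \<le> 1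
        \<and> T * (8 * (1 + \<tau>) / ((1 - \<tau>) * (Lm * \<delta> p)\<^sup>2) + 16 / (3 * (Lm * \<delta> p))) \<le> real (np p) * (1 - \<tau>)"
      if p: "p \<in> {1..K-1}" for p
    proof -
      define j where "j = K + 1 - p"
      have jK: "j \<in> {1..K}" "2 \<le> j" unfolding j_def using p by auto
      define y where "y = (1 / logbar K) * ((real N - real K) / real (K + 1 - p))"
      have y0: "0 < y" unfolding y_def using lg NK p by auto
      have npy: "np p = nat \<lceil>y\<rceil>" unfolding np_def n_phase_def y_def using p by auto
      have "y \<le> real (np p)" unfolding npy using y0 by linarith
      then have hn: "(real N - real K) / (logbar K * real j) \<le> real (np p)"
        unfolding y_def j_def by (simp add: field_simps)
      have n1: "1 \<le> np p" unfolding npy using y0 by linarith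
      define \<Delta> where "\<Delta> = sorted_gap K Q Sstar j"
      have \<Delta>0: "0 < \<Delta>" unfolding \<Delta>_def using sorted_gap_pos[where j=j, OF gp] jK by auto
      have d: "\<delta> p = \<Delta> / 4" unfolding \<delta>_def \<Delta>_def j_def ..
      obtain k where k: "k \<in> {1..K}" "\<Delta> \<le> Q k"
        using gap_le_Q[where Q=Q and j=j, OF Sstar(1) S_ne C_ne Q0] jK unfolding \<Delta>_def by auto
      have "Lm * \<Delta> \<le> L k * Q k"
        using Lm_le[OF k(1)] k(2) \<Delta>0 Lm0 by (intro mult_mono) auto
      also have "\<dots> \<le> - ln (1 - \<tau>)" using QL[OF k(1)] by (simp add: mult.commute)
      finally have "exp (Lm * \<Delta>) \<le> exp (- ln (1 - \<tau>))" by simp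
      also have "\<dots> = 1 / (1 - \<tau>)" using tau by (simp add: exp_minus inverse_eq_divide)
      finally have e: "exp (4 * (Lm * \<delta> p)) * (1 - \<tau>) \<le> 1" unfolding d using tau by (simp add: field_simps)
      have TW: "(real N - real K) / (logbar K * H) * (8 * (1 + \<tau>) / ((1 - \<tau>) * (Lm * (\<Delta> / 4))\<^sup>2) + 16 / (3 * (Lm * (\<Delta> / 4))))
         \<le> real (np p) * (1 - \<tau>)"
        by (rule TW_lemma[OF Lm0 \<Delta>0 _ tau _ lg NK _ hn])
           (use bias i0(1) jK Hterm[OF jK(1)] in \<open>auto simp: Lm_def \<Delta>_def\<close>)
      show ?thesis using n1 \<Delta>0 e TW unfolding d T_def by simp
    qed
    have rvi: "\<And>i t. i \<in> {1..K} \<Longrightarrow> X i t \<in> borel_measurable M" using rv by auto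
    have tails: "measure M (U p i) \<le> exp (- T) \<and> measure M (Lo p i) \<le> exp (- T)"
      if p: "p \<in> {1..K-1}" and i: "i \<in> {1..K}" for p i
    proof -
      note ph = phase[OF p]
      have ind_i: "P.indep_vars (\<lambda>_. borel) (X i) {..<np p}"
        by (rule P.indep_vars_arm[OF indep i])
      have dist: "\<And>t. t < np p \<Longrightarrow> distr M borel (X i t) = dens_meas (f i)" using distr i by auto
      note at = arm_tail[where Lm=Lm and \<delta>="\<delta> p", OF P ihr'[OF i] ind_i dist _ tau Lm0 _ _ _ T2]
      have "Lm \<le> hazard_lb (f i)" using Lm_le[OF i] unfolding L_def by simp
      then show ?thesis using at ph unfolding U_def Lo_def Q_def by auto
    qed
    have meas: "U p i \<in> P.events \<and> Lo p i \<in> P.events" if i: "i \<in> {1..K}" for p i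
      unfolding U_def Lo_def using cnt_meas[of "X i" M] rvi[OF i] by auto
    have sub: "bad \<subseteq> (\<Union>pi\<in>{1..K-1} \<times> {1..K}. U (fst pi) (snd pi) \<union> Lo (fst pi) (snd pi))"
    proof
      fix \<omega> assume w: "\<omega> \<in> bad"
      then have ws: "\<omega> \<in> space M" and ne: "qsar N K m (qq \<omega>) \<noteq> Sstar" unfolding bad_def by auto
      have "\<not> (\<forall>p\<in>{1..K-1}. \<forall>i\<in>{1..K}. \<bar>qq \<omega> i (n_phase N K p) - Q i\<bar> < sorted_gap K Q Sstar (K + 1 - p) / 4)"
        using sar_correct[OF Sstar(1) S_ne C_ne Sstar(2) sep] ne by blast
      then obtain p i where p: "p \<in> {1..K-1}" and i: "i \<in> {1..K}"
        and nb: "\<not> \<bar>qq \<omega> i (np p) - Q i\<bar> < \<delta> p" unfolding np_def \<delta>_def by auto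
      have n1: "1 \<le> np p" using phase[OF p] by simp
      have "\<omega> \<in> U p i \<union> Lo p i"
      proof (cases "Q i + \<delta> p \<le> qq \<omega> i (np p)")
        case True
        then have "kap \<tau> (np p) \<le> card {t\<in>{..<np p}. Q i + \<delta> p \<le> X i t \<omega>}"
          using emp_quantile_ge_iff[of \<tau> "np p" "Q i + \<delta> p" "\<lambda>k. X i k \<omega>"] tau n1 unfolding qq_def by auto
        then show ?thesis unfolding U_def using ws by auto
      next
        case False
        then have "qq \<omega> i (np p) \<le> Q i - \<delta> p" using nb by auto
        then have "card {t\<in>{..<np p}. Q i - \<delta> p < X i t \<omega>} < kap \<tau> (np p)"
          using emp_quantile_le_iff[of \<tau> "np p" "\<lambda>k. X i k \<omega>" "Q i - \<delta> p"] tau n1 unfolding qq_def by auto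
        then show ?thesis unfolding Lo_def using ws by auto
      qed
      then show "\<omega> \<in> (\<Union>pi\<in>{1..K-1} \<times> {1..K}. U (fst pi) (snd pi) \<union> Lo (fst pi) (snd pi))"
        using p i by force
    qed
    have "measure M bad \<le> measure M (\<Union>pi\<in>{1..K-1} \<times> {1..K}. U (fst pi) (snd pi) \<union> Lo (fst pi) (snd pi))"
    proof (rule P.finite_measure_mono[OF sub])
      show "(\<Union>pi\<in>{1..K-1} \<times> {1..K}. U (fst pi) (snd pi) \<union> Lo (fst pi) (snd pi)) \<in> P.events"
      proof (rule sets.finite_UN)
        fix pi assume "pi \<in> {1..K-1} \<times> {1..K}"
        then show "U (fst pi) (snd pi) \<union> Lo (fst pi) (snd pi) \<in> P.events" using meas by auto
      qed simp
    qed
    also have "\<dots> \<le> (\<Sum>pi\<in>{1..K-1} \<times> {1..K}. measure M (U (fst pi) (snd pi) \<union> Lo (fst pi) (snd pi)))"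
      by (rule measure_UNION_le) (use meas in auto)
    also have "\<dots> \<le> (\<Sum>pi\<in>{1..K-1} \<times> {1..K}. 2 * exp (- T))"
    proof (rule sum_mono)
      fix pi assume pi: "pi \<in> {1..K-1} \<times> {1..K}"
      have "measure M (U (fst pi) (snd pi) \<union> Lo (fst pi) (snd pi))
          \<le> measure M (U (fst pi) (snd pi)) + measure M (Lo (fst pi) (snd pi))"
        by (rule measure_Un_le) (use meas pi in auto)
      also have "\<dots> \<le> 2 * exp (- T)" using tails[of "fst pi" "snd pi"] pi by auto
      finally show "measure M (U (fst pi) (snd pi) \<union> Lo (fst pi) (snd pi)) \<le> 2 * exp (- T)" .
    qed
    also have "\<dots> = real ((K - 1) * K) * (2 * exp (- T))" by simp
    also have "\<dots> \<le> 2 * real K ^ 2 * exp (- T)"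
    proof -
      have "(K - 1) * K \<le> K * K" by simp
      then have "real ((K - 1) * K) \<le> real K ^ 2" unfolding power2_eq_square by (metis of_nat_le_iff of_nat_mult)
      then have "real ((K - 1) * K) * (2 * exp (- T)) \<le> real K ^ 2 * (2 * exp (- T))"
        by (intro mult_right_mono) auto
      then show ?thesis by (simp add: mult_ac)
    qed
    finally show ?thesis .
  qed
  show ?thesis unfolding goal_eq bad_eq by (rule main)
qed


end
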